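(* Let $\boldsymbol k$ be an algebraically closed field with $\operatorname{char}\boldsymbol k\neq 2$, let $V$ be a vector space over $\boldsymbol k$ of finite dimension $n\geqslant 2$, let $\mathcal M:=V^*\otimes V^*\otimes V$, and let $G:=\mathrm{GL}(V)$ act naturally on $\mathcal M$. Then there exist a set $\{f_i\}_{i\in I}$ of $n^3-n^2$ rational $G$-invariant functions on $\mathcal M$, algebraically independent over $\boldsymbol k$, and a finite set $\{h_j\}_{j\in J}$ of nonconstant polynomial functions on $\mathcal M$ such that: (i) for any points $a,b$ of the dense open subset $\{m\in\mathcal M\mid h_j(m)\neq 0\ \forall j\in J\}$ of $\mathcal M$, the conditions (a) $G\cdot a=G\cdot b$ and (b) $f_i(a)=f_i(b)$ for all $i\in I$ are equivalent; (ii) the set $\{f_i\}_{i\in I}$ generates the field $\boldsymbol k(\mathcal M)^G$ over $\boldsymbol k$. Moreover, if $n=1$, then $\boldsymbol k(\mathcal M)^G=\boldsymbol k$ and $\mathcal M\setminus\{0\}$ is a single $G$-orbit.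
   Context: $\boldsymbol k(\mathcal M)^G$ denotes the field of $G$-invariant rational functions on $\mathcal M$. Topological notions refer to the Zariski topology. *)

theory Defs
  imports "HOL-Computational_Algebra.Polynomial" "HOL-Library.Cardinality"
begin

definition alg_closed_field :: "'k::field itself \<Rightarrow> bool" where
  "alg_closed_field _ \<longleftrightarrow> (\<forall>p::'k poly. degree p \<ge> 1 \<longrightarrow> (\<exists>x. poly p x = 0))"

inductive poly_fun :: "'i set \<Rightarrow> (('i \<Rightarrow> 'k::comm_ring_1) \<Rightarrow> 'k) \<Rightarrow> bool" for S where
  pf_const: "poly_fun S (\<lambda>x. c)"
| pf_var: "i \<in> S \<Longrightarrow> poly_fun S (\<lambda>x. x i)"
| pf_add: "poly_fun S p \<Longrightarrow> poly_fun S q \<Longrightarrow> poly_fun S (\<lambda>x. p x + q x)"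
| pf_mult: "poly_fun S p \<Longrightarrow> poly_fun S q \<Longrightarrow> poly_fun S (\<lambda>x. p x * q x)"

text \<open>Points of M = V* (x) V* (x) V, with V = k^n (basis indexed by type 'n):
  a point T is given by its structure constants T(a,b,c) = T_{ab}^c.\<close>
type_synonym ('k,'n) tensor = "'n \<times> 'n \<times> 'n \<Rightarrow> 'k"

definition is_inverse :: "('n::finite \<Rightarrow> 'n \<Rightarrow> 'k::field) \<Rightarrow> ('n \<Rightarrow> 'n \<Rightarrow> 'k) \<Rightarrow> bool" where
  "is_inverse g h \<longleftrightarrow>
     (\<forall>i j. (\<Sum>k\<in>UNIV. g i k * h k j) = (if i = j then 1 else 0)) \<and>
     (\<forall>i j. (\<Sum>k\<in>UNIV. h i k * g k j) = (if i = j then 1 else 0))"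

definition GL :: "('n::finite \<Rightarrow> 'n \<Rightarrow> 'k::field) set" where
  "GL = {g. \<exists>h. is_inverse g h}"

definition mat_inv :: "('n::finite \<Rightarrow> 'n \<Rightarrow> 'k::field) \<Rightarrow> ('n \<Rightarrow> 'n \<Rightarrow> 'k)" where
  "mat_inv g = (SOME h. is_inverse g h)"

text \<open>Natural action: (g.T)(x,y) = g T(g^{-1} x, g^{-1} y), in coordinates.\<close>
definition act :: "('n::finite \<Rightarrow> 'n \<Rightarrow> 'k::field) \<Rightarrow> ('k,'n) tensor \<Rightarrow> ('k,'n) tensor" where
  "act g T = (\<lambda>(i,j,l). \<Sum>a\<in>UNIV. \<Sum>b\<in>UNIV. \<Sum>c\<in>UNIV.
      g l c * T (a,b,c) * mat_inv g a i * mat_inv g b j)"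

definition orbit :: "('k::field,'n::finite) tensor \<Rightarrow> ('k,'n) tensor set" where
  "orbit T = {act g T | g. g \<in> GL}"

text \<open>A rational function on M, represented as a quotient p/q of polynomial
  functions with q not identically zero.\<close>
definition is_ratfun :: "(('k::field,'n::finite) tensor \<Rightarrow> 'k) \<times> (('k,'n) tensor \<Rightarrow> 'k) \<Rightarrow> bool" where
  "is_ratfun f \<longleftrightarrow> poly_fun UNIV (fst f) \<and> poly_fun UNIV (snd f) \<and> (\<exists>m. snd f m \<noteq> 0)"

text \<open>G-invariance of p/q as an element of k(M): p(g.m)/q(g.m) = p(m)/q(m) as rational functions.\<close>
definition invariant_ratfun :: "(('k::field,'n::finite) tensor \<Rightarrow> 'k) \<times> (('k,'n) tensor \<Rightarrow> 'k) \<Rightarrow> bool" where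
  "invariant_ratfun f \<longleftrightarrow>
     (\<forall>g\<in>GL. \<forall>m. fst f (act g m) * snd f m = fst f m * snd f (act g m))"

end

theory Submission
  imports Defs "HOL-Analysis.Determinants"
begin


lemma pf_minus: "poly_fun S p \<Longrightarrow> poly_fun S q \<Longrightarrow> poly_fun S (\<lambda>x. p x - q x)"
proof -
  assume "poly_fun S p" "poly_fun S q"
  then have "poly_fun S (\<lambda>x. p x + (-1) * q x)" by (intro pf_add pf_mult pf_const)
  then show ?thesis by simp
qed

lemma pf_sum: "finite A \<Longrightarrow> (\<And>a. a \<in> A \<Longrightarrow> poly_fun S (f a)) \<Longrightarrow> poly_fun S (\<lambda>x. \<Sum>a\<in>A. f a x)"
proof (induction A rule: finite_induct)
  case empty
  then show ?case using pf_const[of S 0] by simp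
next
  case (insert a A)
  then show ?case by (simp add: pf_add)
qed

lemma pf_prod: "finite A \<Longrightarrow> (\<And>a. a \<in> A \<Longrightarrow> poly_fun S (f a)) \<Longrightarrow> poly_fun S (\<lambda>x. \<Prod>a\<in>A. f a x)"
proof (induction A rule: finite_induct)
  case empty
  then show ?case using pf_const[of S 1] by simp
next
  case (insert a A)
  then show ?case by (simp add: pf_mult)
qed

lemma pf_pow: "poly_fun S p \<Longrightarrow> poly_fun S (\<lambda>x. p x ^ k)"
  by (induction k) (auto intro: pf_mult pf_const[of S 1, simplified])

lemma pf_dep: "poly_fun S p \<Longrightarrow> (\<And>i. i \<in> S \<Longrightarrow> x i = y i) \<Longrightarrow> p x = p y"
  by (induction rule: poly_fun.induct) auto

lemma pf_comp: "poly_fun S p \<Longrightarrow> (\<And>i. i \<in> S \<Longrightarrow> poly_fun S' (\<lambda>y. F y i)) \<Longrightarrow> poly_fun S' (\<lambda>y. p (F y))"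
  by (induction rule: poly_fun.induct) (auto intro: pf_const pf_add pf_mult)

lemma pf_line: "poly_fun S p \<Longrightarrow> \<exists>q. \<forall>t. p (\<lambda>i. x i + t * v i) = poly q t"
proof (induction rule: poly_fun.induct)
  case (pf_const c)
  show ?case by (rule exI[of _ "[:c:]"]) simp
next
  case (pf_var i)
  show ?case by (rule exI[of _ "[:x i, v i:]"]) (simp add: algebra_simps)
next
  case (pf_add p q)
  then obtain a b where "\<forall>t. p (\<lambda>i. x i + t * v i) = poly a t" "\<forall>t. q (\<lambda>i. x i + t * v i) = poly b t" by blast
  then show ?case by (intro exI[of _ "a + b"]) simp
next
  case (pf_mult p q)
  then obtain a b where "\<forall>t. p (\<lambda>i. x i + t * v i) = poly a t" "\<forall>t. q (\<lambda>i. x i + t * v i) = poly b t" by blast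
  then show ?case by (intro exI[of _ "a * b"]) simp
qed

lemma alg_closed_infinite:
  assumes "alg_closed_field TYPE('k::field)"
  shows "infinite (UNIV :: 'k set)"
proof
  assume fin: "finite (UNIV :: 'k set)"
  define p :: "'k poly" where "p = (\<Prod>a\<in>UNIV. [:-a, 1:]) + 1"
  have "degree (\<Prod>a\<in>UNIV. [:-a, (1::'k):]) = card (UNIV :: 'k set)"
    using fin by (simp add: degree_prod_eq_sum_degree)
  moreover have "card (UNIV :: 'k set) \<ge> 2"
  proof -
    have "{0, 1::'k} \<subseteq> UNIV" by simp
    then have "card {0, 1::'k} \<le> card (UNIV::'k set)" using fin by (rule card_mono[rotated])
    then show ?thesis by simp
  qed
  ultimately have "degree p \<ge> 1" unfolding p_def by (simp add: degree_add_eq_left)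
  then obtain x where "poly p x = 0" using assms unfolding alg_closed_field_def by blast
  moreover have "poly (\<Prod>a\<in>UNIV. [:-a, 1:]) x = 0"
    using fin by (simp add: poly_prod prod_zero_iff)
  ultimately show False unfolding p_def by simp
qed

lemma pf_nonvanish2:
  fixes p q :: "('i \<Rightarrow> 'k::field) \<Rightarrow> 'k"
  assumes inf: "infinite (UNIV :: 'k set)" and "poly_fun S p" "poly_fun S q" "p x0 \<noteq> 0" "q x1 \<noteq> 0"
  shows "\<exists>x. p x \<noteq> 0 \<and> q x \<noteq> 0"
proof -
  obtain a where a: "\<forall>t. p (\<lambda>i. x0 i + t * (x1 i - x0 i)) = poly a t" using pf_line[OF assms(2), of x0 "\<lambda>i. x1 i - x0 i"] by blast
  obtain b where b: "\<forall>t. q (\<lambda>i. x0 i + t * (x1 i - x0 i)) = poly b t" using pf_line[OF assms(3), of x0 "\<lambda>i. x1 i - x0 i"] by blast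
  have "poly a 0 = p x0" using a[rule_format, of 0] by simp
  then have "a \<noteq> 0" using assms(4) by auto
  have "poly b 1 = q x1" using b[rule_format, of 1] by simp
  then have "b \<noteq> 0" using assms(5) by auto
  have "a * b \<noteq> 0" using \<open>a \<noteq> 0\<close> \<open>b \<noteq> 0\<close> by simp
  then have "finite {t. poly (a * b) t = 0}" by (rule poly_roots_finite)
  then obtain t where "poly (a * b) t \<noteq> 0" using inf
    by (metis (mono_tags, lifting) UNIV_I finite_subset mem_Collect_eq subsetI)
  then show ?thesis using a b by (intro exI[of _ "\<lambda>i. x0 i + t * (x1 i - x0 i)"]) auto
qed


lemma rot3: "(\<Sum>a\<in>A. \<Sum>b\<in>B. \<Sum>c\<in>C. f a b c) = (\<Sum>c\<in>C. \<Sum>a\<in>A. \<Sum>b\<in>B. f a b c)"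
proof -
  have "(\<Sum>a\<in>A. \<Sum>b\<in>B. \<Sum>c\<in>C. f a b c) = (\<Sum>a\<in>A. \<Sum>c\<in>C. \<Sum>b\<in>B. f a b c)"
    by (rule sum.cong[OF refl], rule sum.swap)
  also have "\<dots> = (\<Sum>c\<in>C. \<Sum>a\<in>A. \<Sum>b\<in>B. f a b c)" by (rule sum.swap)
  finally show ?thesis .
qed

definition vm :: "('n::finite \<Rightarrow> 'n \<Rightarrow> 'k) \<Rightarrow> 'k^'n^'n" where "vm g = (\<chi> i j. g i j)"
definition fm :: "'k^'n::finite^'n \<Rightarrow> ('n \<Rightarrow> 'n \<Rightarrow> 'k)" where "fm A = (\<lambda>i j. A$i$j)"

lemma vm_fm[simp]: "vm (fm A) = A" by (simp add: vm_def fm_def vec_eq_iff)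
lemma fm_vm[simp]: "fm (vm g) = g" by (simp add: vm_def fm_def)
lemma vm_nth[simp]: "vm g $ i $ j = g i j" by (simp add: vm_def)

definition Lm :: "('k::comm_ring_1,'n::finite) tensor \<Rightarrow> 'k^'n \<Rightarrow> 'k^'n \<Rightarrow> 'k^'n" where
  "Lm T x y = (\<chi> c. \<Sum>a\<in>UNIV. \<Sum>b\<in>UNIV. x$a * y$b * T(a,b,c))"

definition actv :: "'k::comm_ring_1^'n::finite^'n \<Rightarrow> 'k^'n^'n \<Rightarrow> ('k,'n) tensor \<Rightarrow> ('k,'n) tensor" where
  "actv G H T = (\<lambda>(i,j,l). \<Sum>a\<in>UNIV. \<Sum>b\<in>UNIV. \<Sum>c\<in>UNIV. G$l$c * T (a,b,c) * H$a$i * H$b$j)"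

lemma is_inverse_vm: "is_inverse g h \<longleftrightarrow> vm g ** vm h = mat 1 \<and> vm h ** vm g = mat 1"
  by (simp add: is_inverse_def vec_eq_iff matrix_matrix_mult_def mat_def)

lemma act_actv: "act g T = actv (vm g) (vm (mat_inv g)) T"
  by (simp add: act_def actv_def)

lemma actv_Lm: "actv G H T (i,j,l) = (G *v Lm T (column i H) (column j H)) $ l"
  unfolding actv_def Lm_def matrix_vector_mult_def column_def
  apply (subst rot3) by (simp add: sum_distrib_left mult_ac)

lemma Lm_add1: "Lm T (x + x') y = Lm T x y + Lm T x' y"
  by (simp add: Lm_def vec_eq_iff algebra_simps sum.distrib)
lemma Lm_add2: "Lm T x (y + y') = Lm T x y + Lm T x y'"
  by (simp add: Lm_def vec_eq_iff algebra_simps sum.distrib)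
lemma Lm_scale1: "Lm T (c *s x) y = c *s Lm T x y"
  by (simp add: Lm_def vec_eq_iff sum_distrib_left mult_ac)
lemma Lm_scale2: "Lm T x (c *s y) = c *s Lm T x y"
  by (simp add: Lm_def vec_eq_iff sum_distrib_left mult_ac)
lemma Lm_zero1: "Lm T 0 y = 0" by (simp add: Lm_def vec_eq_iff)
lemma Lm_zero2: "Lm T x 0 = 0" by (simp add: Lm_def vec_eq_iff)
lemma Lm_sum1: "finite A \<Longrightarrow> Lm T (\<Sum>i\<in>A. f i) y = (\<Sum>i\<in>A. Lm T (f i) y)"
  by (induction A rule: finite_induct) (auto simp: Lm_zero1 Lm_add1)
lemma Lm_sum2: "finite A \<Longrightarrow> Lm T x (\<Sum>i\<in>A. f i) = (\<Sum>i\<in>A. Lm T x (f i))"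
  by (induction A rule: finite_induct) (auto simp: Lm_zero2 Lm_add2)

lemma column_mult: "column i (A ** B) = A *v column i B"
  by (simp add: column_def matrix_matrix_mult_def matrix_vector_mult_def vec_eq_iff)

lemma column_mat1: "column i (mat 1 :: 'a::comm_ring_1^'n::finite^'n) = axis i 1"
  by (simp add: column_def mat_def axis_def vec_eq_iff)

lemma Lm_actv: fixes T :: "('k::field,'n::finite) tensor"
  shows "Lm (actv G H T) x y = G *v Lm T (H *v x) (H *v y)"
proof -
  have hx: "H *v x = (\<Sum>i\<in>UNIV. x$i *s column i H)" by (rule matrix_mult_sum)
  have hy: "H *v y = (\<Sum>i\<in>UNIV. y$i *s column i H)" by (rule matrix_mult_sum)
  have "G *v Lm T (H *v x) (H *v y) = (\<Sum>j\<in>UNIV. \<Sum>i\<in>UNIV. (x$i * y$j) *s (G *v Lm T (column i H) (column j H)))"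
    by (simp add: hx hy Lm_sum1 Lm_sum2 Lm_scale1 Lm_scale2 vec.sum vec.scale vector_smult_assoc mult.commute vec.scale_sum_right del: sum_cmul)
  also have "\<dots> = (\<Sum>i\<in>UNIV. \<Sum>j\<in>UNIV. (x$i * y$j) *s (G *v Lm T (column i H) (column j H)))"
    by (rule sum.swap)
  finally have "G *v Lm T (H *v x) (H *v y) = (\<Sum>i\<in>UNIV. \<Sum>j\<in>UNIV. (x$i * y$j) *s (G *v Lm T (column i H) (column j H)))" .
  moreover have "Lm (actv G H T) x y = (\<Sum>i\<in>UNIV. \<Sum>j\<in>UNIV. (x$i * y$j) *s (G *v Lm T (column i H) (column j H)))"
    by (simp add: vec_eq_iff Lm_def actv_Lm sum_component mult_ac)
  ultimately show ?thesis by simp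
qed

lemma actv_comp: fixes T :: "('k::field,'n::finite) tensor" shows "actv G1 H1 (actv G2 H2 T) = actv (G1 ** G2) (H2 ** H1) T"
proof (rule ext, clarify)
  fix i j l
  show "actv G1 H1 (actv G2 H2 T) (i, j, l) = actv (G1 ** G2) (H2 ** H1) T (i, j, l)"
    by (simp add: actv_Lm Lm_actv column_mult matrix_vector_mul_assoc)
qed

lemma Lm_axis_axis: "Lm T (axis i 1) (axis j 1) $ l = T (i,j,l)"
proof -
  have *: "\<And>a b. (if a = i then (1::'a) else 0) * (if b = j then 1 else 0) * T (a,b,l) = (if a = i then if b = j then T(a,b,l) else 0 else 0)"
    by simp
  have **: "\<And>a. (\<Sum>b\<in>UNIV. if a = i then if b = j then T (i,j,l) else 0 else 0) = (if a = i then T(i,j,l) else 0)"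
    by (case_tac "a = i") simp_all
  show ?thesis by (simp add: Lm_def axis_def * ** cong: if_cong)
qed

lemma actv_id: "actv (mat 1) (mat 1) T = T"
proof (rule ext, clarify)
  fix i j l
  show "actv (mat 1) (mat 1) T (i, j, l) = T (i, j, l)"
    by (simp add: actv_Lm column_mat1 Lm_axis_axis)
qed


definition ip :: "'k::comm_ring_1^'n::finite^'n \<Rightarrow> 'k^'n^'n \<Rightarrow> bool" where
  "ip G H \<longleftrightarrow> G ** H = mat 1 \<and> H ** G = mat 1"

lemma ip_sym: "ip G H \<Longrightarrow> ip H G" by (simp add: ip_def)

lemma ip_unique: "ip G H \<Longrightarrow> ip G H' \<Longrightarrow> H = H'"
proof -
  assume a: "ip G H" "ip G H'"
  have "H = H ** (G ** H')" using a by (simp add: ip_def)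
  also have "\<dots> = (H ** G) ** H'" by (simp add: matrix_mul_assoc)
  also have "\<dots> = H'" using a by (simp add: ip_def)
  finally show ?thesis .
qed

lemma ip_mult: "ip G H \<Longrightarrow> ip G' H' \<Longrightarrow> ip (G' ** G) (H ** H')"
proof -
  assume a: "ip G H" "ip G' H'"
  have "(G' ** G) ** (H ** H') = G' ** ((G ** H) ** H')" by (simp add: matrix_mul_assoc)
  also have "\<dots> = mat 1" using a by (simp add: ip_def)
  finally have 1: "(G' ** G) ** (H ** H') = mat 1" .
  have "(H ** H') ** (G' ** G) = H ** ((H' ** G') ** G)" by (simp add: matrix_mul_assoc)
  also have "\<dots> = mat 1" using a by (simp add: ip_def)
  finally show ?thesis using 1 by (simp add: ip_def)
qed

lemma ip_id: "ip (mat 1) (mat 1)" by (simp add: ip_def)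

lemma ip_matrix_inv: "invertible G \<Longrightarrow> ip G (matrix_inv G)"
  unfolding ip_def matrix_inv_def invertible_def by (rule someI_ex)

lemma ip_invertible: "ip G H \<Longrightarrow> invertible G"
  unfolding ip_def invertible_def by blast

lemma ip_det: fixes G :: "'k::field^'n::finite^'n" shows "ip G H \<Longrightarrow> det G \<noteq> 0"
  using ip_invertible invertible_det_nz by blast

lemma GL_iff: "g \<in> GL \<longleftrightarrow> (\<exists>H. ip (vm g) H)"
  unfolding GL_def is_inverse_vm ip_def
proof safe
  fix h assume "vm g ** vm h = mat 1" "vm h ** vm g = mat 1"
  then show "\<exists>H. vm g ** H = mat 1 \<and> H ** vm g = mat 1" by blast
next
  fix H assume "vm g ** H = mat 1" "H ** vm g = mat 1"
  then show "\<exists>h. vm g ** vm h = mat 1 \<and> vm h ** vm g = mat 1" by (intro exI[of _ "fm H"]) simp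
qed

lemma mat_inv_GL: "g \<in> GL \<Longrightarrow> ip (vm g) (vm (mat_inv g))"
proof -
  assume "g \<in> GL"
  then have "\<exists>h. is_inverse g h" by (simp add: GL_def)
  then have "is_inverse g (mat_inv g)" unfolding mat_inv_def by (rule someI_ex)
  then show ?thesis by (simp add: is_inverse_vm ip_def)
qed

lemma orbit_ip: "orbit T = {actv G H T | G H. ip G H}"
proof (rule set_eqI, rule iffI)
  fix x assume "x \<in> orbit T"
  then obtain g where "g \<in> GL" "x = act g T" by (auto simp: orbit_def)
  then show "x \<in> {actv G H T | G H. ip G H}" using mat_inv_GL act_actv by blast
next
  fix x assume "x \<in> {actv G H T | G H. ip G H}"
  then obtain G H where GH: "ip G H" "x = actv G H T" by blast
  let ?g = "fm G"
  have "?g \<in> GL" using GH GL_iff by fastforce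
  then have "ip G (vm (mat_inv ?g))" using mat_inv_GL by fastforce
  then have "vm (mat_inv ?g) = H" using ip_unique GH by blast
  then have "x = act ?g T" using GH by (simp add: act_actv)
  then show "x \<in> orbit T" using \<open>?g \<in> GL\<close> by (auto simp: orbit_def)
qed

lemma in_orbit: "ip G H \<Longrightarrow> actv G H T \<in> orbit T" by (auto simp: orbit_ip)

lemma orbit_refl: "T \<in> orbit T" using in_orbit[OF ip_id, of T] by (simp add: actv_id)

lemma orbit_sub: fixes a :: "('k::field,'n::finite) tensor"
  shows "b \<in> orbit a \<Longrightarrow> orbit b \<subseteq> orbit a"
proof
  fix c assume "b \<in> orbit a" "c \<in> orbit b"
  then obtain G H G' H' where "ip G H" "b = actv G H a" "ip G' H'" "c = actv G' H' b" by (auto simp: orbit_ip)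
  then have "c = actv (G' ** G) (H ** H') a" by (simp add: actv_comp)
  then show "c \<in> orbit a" using ip_mult[OF \<open>ip G H\<close> \<open>ip G' H'\<close>] in_orbit by blast
qed

lemma orbit_symm: fixes a :: "('k::field,'n::finite) tensor"
  shows "b \<in> orbit a \<Longrightarrow> a \<in> orbit b"
proof -
  assume "b \<in> orbit a"
  then obtain G H where GH: "ip G H" "b = actv G H a" by (auto simp: orbit_ip)
  then have "actv H G b = a" using actv_comp[of H G G H a] by (simp add: ip_def actv_id)
  then show ?thesis using in_orbit[OF ip_sym[OF GH(1)]] by metis
qed

lemma orbit_eq_iff: fixes a :: "('k::field,'n::finite) tensor"
  shows "orbit a = orbit b \<longleftrightarrow> b \<in> orbit a"
  using orbit_sub orbit_symm orbit_refl by blast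

lemma invariant_ratfun_ip: fixes f :: "(('k::field,'n::finite) tensor \<Rightarrow> 'k) \<times> (('k,'n) tensor \<Rightarrow> 'k)"
  shows "invariant_ratfun f \<longleftrightarrow> (\<forall>G H m. ip G H \<longrightarrow> fst f (actv G H m) * snd f m = fst f m * snd f (actv G H m))"
proof
  assume "invariant_ratfun f"
  then have A: "\<forall>g\<in>GL. \<forall>m. fst f (act g m) * snd f m = fst f m * snd f (act g m)" by (simp add: invariant_ratfun_def)
  show "\<forall>G H m. ip G H \<longrightarrow> fst f (actv G H m) * snd f m = fst f m * snd f (actv G H m)"
  proof (intro allI impI)
    fix G H :: "'k^'n^'n" and m assume "ip G H"
    have "fm G \<in> GL" using GL_iff \<open>ip G H\<close> by fastforce
    then have "vm (mat_inv (fm G)) = H" using mat_inv_GL ip_unique \<open>ip G H\<close> by fastforce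
    then show "fst f (actv G H m) * snd f m = fst f m * snd f (actv G H m)"
      using A \<open>fm G \<in> GL\<close> by (metis act_actv vm_fm)
  qed
next
  assume A: "\<forall>G H m. ip G H \<longrightarrow> fst f (actv G H m) * snd f m = fst f m * snd f (actv G H m)"
  show "invariant_ratfun f" unfolding invariant_ratfun_def
    using A mat_inv_GL act_actv by metis
qed


definition sdot :: "'k::comm_ring_1^'n::finite \<Rightarrow> 'k^'n \<Rightarrow> 'k" where
  "sdot u v = (\<Sum>i\<in>UNIV. u$i * v$i)"

definition tau :: "('k::field,'n::finite) tensor \<Rightarrow> 'k^'n" where
  "tau T = (\<chi> a. \<Sum>b\<in>UNIV. T(a,b,b))"

definition Bm :: "('k::field,'n::finite) tensor \<Rightarrow> 'k^'n^'n" where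
  "Bm T = (\<chi> a b. \<Sum>c\<in>UNIV. T(a,b,c) * tau T $ c)"

definition beta :: "('k::field,'n::finite) tensor \<Rightarrow> 'k" where
  "beta T = det (Bm T)"

definition w1 :: "('k::field,'n::finite) tensor \<Rightarrow> 'k^'n" where
  "w1 T = (\<chi> k. det (\<chi> i j. if j = k then tau T $ i else transpose (Bm T) $ i $ j) / beta T)"

lemma w1_eq: "beta T \<noteq> 0 \<Longrightarrow> transpose (Bm T) *v x = tau T \<longleftrightarrow> x = w1 T"
  unfolding w1_def beta_def using cramer[of "transpose (Bm T)" x "tau T"] by simp

lemma w1_prop: "beta T \<noteq> 0 \<Longrightarrow> transpose (Bm T) *v w1 T = tau T"
  using w1_eq by blast

lemma rot4: "(\<Sum>j\<in>J. \<Sum>a\<in>A. \<Sum>b\<in>B. \<Sum>c\<in>C. f j a b c) = (\<Sum>a\<in>A. \<Sum>b\<in>B. \<Sum>c\<in>C. \<Sum>j\<in>J. f j a b c)"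
proof -
  have "(\<Sum>j\<in>J. \<Sum>a\<in>A. \<Sum>b\<in>B. \<Sum>c\<in>C. f j a b c) = (\<Sum>a\<in>A. \<Sum>j\<in>J. \<Sum>b\<in>B. \<Sum>c\<in>C. f j a b c)"
    by (rule sum.swap)
  also have "\<dots> = (\<Sum>a\<in>A. \<Sum>b\<in>B. \<Sum>j\<in>J. \<Sum>c\<in>C. f j a b c)"
    by (rule sum.cong[OF refl], rule sum.swap)
  also have "\<dots> = (\<Sum>a\<in>A. \<Sum>b\<in>B. \<Sum>c\<in>C. \<Sum>j\<in>J. f j a b c)"
    by (rule sum.cong[OF refl], rule sum.cong[OF refl], rule sum.swap)
  finally show ?thesis .
qed

lemma if10_mult: "(if P then (1::'k::comm_ring_1) else 0) * x = (if P then x else 0)"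
   "x * (if P then (1::'k::comm_ring_1) else 0) = (if P then x else 0)" by simp_all

lemma tau_actv: fixes T :: "('k::field,'n::finite) tensor"
  assumes "ip G H" shows "tau (actv G H T) = transpose H *v tau T"
proof -
  have HG: "H ** G = mat 1" using assms by (simp add: ip_def)
  have *: "(\<Sum>j\<in>UNIV. G$j$c * T (a,b,c) * H$a$i * H$b$j) = H$a$i * T(a,b,c) * (H ** G)$b$c" for a b c i
    by (simp add: matrix_matrix_mult_def sum_distrib_left mult_ac)
  show ?thesis
    unfolding vec_eq_iff
  proof
    fix i
    have "tau (actv G H T) $ i = (\<Sum>j\<in>UNIV. \<Sum>a\<in>UNIV. \<Sum>b\<in>UNIV. \<Sum>c\<in>UNIV. G$j$c * T (a,b,c) * H$a$i * H$b$j)"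
      by (simp add: tau_def actv_def)
    also have "\<dots> = (\<Sum>a\<in>UNIV. \<Sum>b\<in>UNIV. \<Sum>c\<in>UNIV. H$a$i * T(a,b,c) * (H ** G)$b$c)"
      by (subst rot4) (simp add: *)
    also have "\<dots> = (\<Sum>a\<in>UNIV. H$a$i * (\<Sum>b\<in>UNIV. T(a,b,b)))"
      by (simp add: HG mat_def sum_distrib_left if10_mult)
    also have "\<dots> = (transpose H *v tau T) $ i"
      by (simp add: matrix_vector_mult_def transpose_def tau_def)
    finally show "tau (actv G H T) $ i = (transpose H *v tau T) $ i" .
  qed
qed

lemma sdot_comm: "sdot u v = sdot v u" by (simp add: sdot_def mult.commute)

lemma sdot_transpose: "sdot (transpose H *v t) u = sdot t (H *v u)"
proof -
  have "sdot (transpose H *v t) u = (\<Sum>i\<in>UNIV. \<Sum>d\<in>UNIV. t$d * (H$d$i * u$i))"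
    by (simp add: sdot_def matrix_vector_mult_def transpose_def sum_distrib_right sum_distrib_left mult_ac)
  also have "\<dots> = (\<Sum>d\<in>UNIV. \<Sum>i\<in>UNIV. t$d * (H$d$i * u$i))" by (rule sum.swap)
  also have "\<dots> = sdot t (H *v u)"
    by (simp add: sdot_def matrix_vector_mult_def sum_distrib_left)
  finally show ?thesis .
qed

lemma Bm_actv: fixes T :: "('k::field,'n::finite) tensor"
  assumes "ip G H" shows "Bm (actv G H T) = transpose H ** Bm T ** H"
proof -
  have HG: "H ** G = mat 1" using assms by (simp add: ip_def)
  show ?thesis unfolding vec_eq_iff
  proof (intro allI)
    fix i j
    let ?v = "Lm T (column i H) (column j H)"
    have eq: "\<And>l. actv G H T (i,j,l) = (G *v ?v) $ l" by (simp add: actv_Lm)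
    have "Bm (actv G H T) $ i $ j = sdot (G *v ?v) (transpose H *v tau T)"
      unfolding Bm_def sdot_def tau_actv[OF assms] by (simp only: eq vec_lambda_beta)
    also have "\<dots> = sdot (tau T) ?v"
      by (subst sdot_comm, simp only: sdot_transpose matrix_vector_mul_assoc HG matrix_vector_mul_lid)
    also have "\<dots> = (\<Sum>c\<in>UNIV. \<Sum>a\<in>UNIV. \<Sum>b\<in>UNIV. H$a$i * T(a,b,c) * tau T $ c * H$b$j)"
      by (simp add: sdot_def Lm_def column_def sum_distrib_left mult_ac)
    also have "\<dots> = (\<Sum>a\<in>UNIV. \<Sum>b\<in>UNIV. \<Sum>c\<in>UNIV. H$a$i * T(a,b,c) * tau T $ c * H$b$j)"
      by (rule rot3[symmetric])
    also have "\<dots> = (\<Sum>b\<in>UNIV. \<Sum>a\<in>UNIV. \<Sum>c\<in>UNIV. H$a$i * T(a,b,c) * tau T $ c * H$b$j)"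
      by (rule sum.swap)
    also have "\<dots> = (transpose H ** Bm T ** H) $ i $ j"
      by (simp add: matrix_matrix_mult_def transpose_def Bm_def sum_distrib_left sum_distrib_right mult_ac)
    finally show "Bm (actv G H T) $ i $ j = (transpose H ** Bm T ** H) $ i $ j" .
  qed
qed

lemma beta_actv: fixes T :: "('k::field,'n::finite) tensor"
  assumes "ip G H" shows "beta (actv G H T) = det H * det H * beta T"
  by (simp add: beta_def Bm_actv[OF assms] det_mul)

lemma beta_actv_nz: fixes T :: "('k::field,'n::finite) tensor"
  assumes "ip G H" "beta T \<noteq> 0" shows "beta (actv G H T) \<noteq> 0"
  using beta_actv[OF assms(1)] ip_det[OF ip_sym[OF assms(1)]] assms(2) by simp

lemma w1_actv: fixes T :: "('k::field,'n::finite) tensor"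
  assumes "ip G H" "beta T \<noteq> 0" shows "w1 (actv G H T) = G *v w1 T"
proof -
  have HG: "H ** G = mat 1" using assms by (simp add: ip_def)
  have "transpose (Bm (actv G H T)) *v (G *v w1 T) = transpose H *v (transpose (Bm T) *v ((H ** G) *v w1 T))"
    by (simp only: Bm_actv[OF assms(1)] matrix_transpose_mul matrix_vector_mul_assoc matrix_mul_assoc transpose_transpose)
  also have "\<dots> = tau (actv G H T)" by (simp only: HG matrix_vector_mul_lid w1_prop[OF assms(2)] tau_actv[OF assms(1)])
  finally show ?thesis using w1_eq[OF beta_actv_nz[OF assms]] by metis
qed

primrec kry :: "('k::field,'n::finite) tensor \<Rightarrow> nat \<Rightarrow> 'k^'n" where
  "kry T 0 = w1 T"
| "kry T (Suc k) = Lm T (w1 T) (kry T k)"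

lemma kry_actv: fixes T :: "('k::field,'n::finite) tensor"
  assumes "ip G H" "beta T \<noteq> 0" shows "kry (actv G H T) k = G *v kry T k"
proof (induction k)
  case 0
  then show ?case by (simp add: w1_actv[OF assms])
next
  case (Suc k)
  have HG: "H ** G = mat 1" using assms by (simp add: ip_def)
  show ?case using Suc by (simp add: w1_actv[OF assms] Lm_actv matrix_vector_mul_assoc HG)
qed

definition ix :: "nat \<Rightarrow> 'n::finite" where
  "ix = (SOME h. bij_betw h {..<CARD('n)} (UNIV::'n set))"

definition ixi :: "'n::finite \<Rightarrow> nat" where
  "ixi = inv_into {..<CARD('n)} ix"

lemma ix_bij: "bij_betw (ix :: nat \<Rightarrow> 'n::finite) {..<CARD('n)} UNIV"
proof -
  obtain h where "bij_betw h {0..<card (UNIV::'n set)} (UNIV::'n set)"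
    using ex_bij_betw_nat_finite[of "UNIV::'n set"] by auto
  then have "\<exists>h. bij_betw h {..<CARD('n)} (UNIV::'n set)" by (auto simp: atLeast0LessThan)
  then show ?thesis unfolding ix_def by (rule someI_ex)
qed

lemma ixi_ix: "k < CARD('n::finite) \<Longrightarrow> ixi (ix k :: 'n) = k"
proof -
  assume "k < CARD('n)"
  moreover have "bij_betw (ix::nat\<Rightarrow>'n) {..<CARD('n)} UNIV" by (rule ix_bij)
  ultimately show ?thesis unfolding ixi_def by (simp add: bij_betw_def inv_into_f_f)
qed

lemma ix_ixi: "ix (ixi (a::'n::finite)) = a"
  using ix_bij unfolding ixi_def by (metis bij_betw_def f_inv_into_f UNIV_I)

lemma ixi_lt: "ixi (a::'n::finite) < CARD('n)"
  using ix_bij unfolding ixi_def by (metis bij_betw_def inv_into_into UNIV_I lessThan_iff)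

lemma ix_inj: "i < CARD('n::finite) \<Longrightarrow> j < CARD('n) \<Longrightarrow> (ix i :: 'n) = ix j \<longleftrightarrow> i = j"
  by (metis ixi_ix)

definition Wm :: "('k::field,'n::finite) tensor \<Rightarrow> 'k^'n^'n" where
  "Wm T = (\<chi> i j. kry T (ixi j) $ i)"

definition good :: "('k::field,'n::finite) tensor \<Rightarrow> bool" where
  "good T \<longleftrightarrow> beta T \<noteq> 0 \<and> det (Wm T) \<noteq> 0"

definition can :: "('k::field,'n::finite) tensor \<Rightarrow> ('k,'n) tensor" where
  "can T = actv (matrix_inv (Wm T)) (Wm T) T"

lemma Wm_actv: fixes T :: "('k::field,'n::finite) tensor"
  assumes "ip G H" "beta T \<noteq> 0" shows "Wm (actv G H T) = G ** Wm T"
  by (simp add: Wm_def kry_actv[OF assms] vec_eq_iff matrix_matrix_mult_def matrix_vector_mult_def)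

lemma good_actv: fixes T :: "('k::field,'n::finite) tensor"
  assumes "ip G H" "good T" shows "good (actv G H T)"
proof -
  have b: "beta T \<noteq> 0" "det (Wm T) \<noteq> 0" using assms by (auto simp: good_def)
  have "det (Wm (actv G H T)) = det G * det (Wm T)" by (simp add: Wm_actv[OF assms(1) b(1)] det_mul)
  then show ?thesis using b beta_actv_nz[OF assms(1) b(1)] ip_det[OF assms(1)] by (simp add: good_def)
qed

lemma good_actv_iff: fixes T :: "('k::field,'n::finite) tensor"
  assumes "ip G H" shows "good (actv G H T) \<longleftrightarrow> good T"
proof
  assume "good (actv G H T)"
  then have "good (actv H G (actv G H T))" using good_actv ip_sym[OF assms] by blast
  then show "good T" using assms by (simp add: actv_comp ip_def actv_id)
qed (rule good_actv[OF assms])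

lemma good_ip: fixes T :: "('k::field,'n::finite) tensor"
  assumes "good T" shows "ip (Wm T) (matrix_inv (Wm T))"
  using assms ip_matrix_inv invertible_det_nz unfolding good_def by blast

lemma can_actv: fixes T :: "('k::field,'n::finite) tensor"
  assumes "ip G H" "good T" shows "can (actv G H T) = can T"
proof -
  have b: "beta T \<noteq> 0" using assms by (simp add: good_def)
  let ?W = "Wm T" and ?Wi = "matrix_inv (Wm T)"
  have W: "ip ?W ?Wi" by (rule good_ip[OF assms(2)])
  have "ip (G ** ?W) (?Wi ** H)" by (rule ip_mult[OF W assms(1)])
  moreover have "ip (G ** ?W) (matrix_inv (G ** ?W))"
    using good_ip[OF good_actv[OF assms]] Wm_actv[OF assms(1) b] by simp
  ultimately have inv: "matrix_inv (G ** ?W) = ?Wi ** H" using ip_unique by blast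
  have HG: "H ** G = mat 1" using assms by (simp add: ip_def)
  have "can (actv G H T) = actv (?Wi ** H ** G) (H ** G ** ?W) T"
    by (simp add: can_def Wm_actv[OF assms(1) b] inv actv_comp matrix_mul_assoc)
  also have "\<dots> = can T" by (simp add: HG matrix_mul_assoc[symmetric] can_def)
  finally show ?thesis .
qed


definition sc :: "('k::field,'n::finite) tensor \<Rightarrow> bool" where
  "sc S \<longleftrightarrow>
     (\<forall>k<CARD('n)-1. \<forall>c. S(ix 0, ix k, c) = (if c = ix (k+1) then 1 else 0)) \<and>
     (\<forall>a. tau S $ a = tau S $ ix 0) \<and>
     (\<Sum>c\<in>UNIV. S(ix 0, ix (CARD('n)-1), c)) = 1"

lemma ix_cases: fixes a :: "'n::finite"
  obtains k where "k < CARD('n)" "a = ix k"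
  using ixi_lt ix_ixi by metis

lemma Lm_axis_vec: "Lm T (axis a 1) (axis b 1) = (\<chi> c. T(a,b,c))"
  by (simp add: vec_eq_iff Lm_axis_axis)

lemma axis_eq_vec: "(\<chi> c. if c = j then 1 else 0) = (axis j 1 :: 'k::comm_ring_1^'n::finite)"
  by (simp add: axis_def vec_eq_iff)

lemma sc_Wm: fixes S :: "('k::field,'n::finite) tensor"
  assumes n2: "CARD('n) \<ge> 2" and sc: "sc S" and b: "beta S \<noteq> 0"
  shows "Wm S = mat 1"
proof -
  let ?n = "CARD('n)"
  define t where "t = tau S $ ix 0"
  have tauc: "\<And>c. tau S $ c = t" using sc by (simp add: sc_def t_def)
  have rows: "(\<Sum>c\<in>UNIV. S(ix 0, b', c)) = 1" for b'
  proof -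
    obtain k where k: "k < ?n" "b' = ix k" using ix_cases by blast
    show ?thesis
    proof (cases "k < ?n - 1")
      case True
      then show ?thesis using sc k by (simp add: sc_def)
    next
      case False
      then have "k = ?n - 1" using k by simp
      then show ?thesis using sc k by (simp add: sc_def)
    qed
  qed
  have wt: "transpose (Bm S) *v axis (ix 0) 1 = tau S"
  proof -
    have "(transpose (Bm S) *v axis (ix 0) 1) $ b' = tau S $ b'" for b'
    proof -
      have "(transpose (Bm S) *v axis (ix 0) 1) $ b' = Bm S $ ix 0 $ b'"
        by (simp add: matrix_vector_mult_def transpose_def axis_def if10_mult cong: if_cong)
      also have "\<dots> = (\<Sum>c\<in>UNIV. S(ix 0, b', c)) * t" by (simp add: Bm_def tauc sum_distrib_right)
      also have "\<dots> = tau S $ b'" by (simp add: rows tauc)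
      finally show ?thesis .
    qed
    then show ?thesis by (simp add: vec_eq_iff)
  qed
  have w: "w1 S = axis (ix 0) 1" using w1_eq[OF b, of "axis (ix 0) 1"] wt by simp
  have kry: "k < ?n \<Longrightarrow> kry S k = axis (ix k) 1" for k
  proof (induction k)
    case 0 then show ?case by (simp add: w)
  next
    case (Suc k)
    then have "k < ?n - 1" by simp
    then have "(\<chi> c. S(ix 0, ix k, c)) = (axis (ix (k+1)) 1 :: 'k^'n)"
      using sc by (simp add: sc_def axis_eq_vec)
    then show ?case using Suc by (simp add: w Lm_axis_vec)
  qed
  show ?thesis
  proof -
    have "Wm S $ i $ j = mat 1 $ i $ j" for i j
      using kry[OF ixi_lt[of j]] by (simp add: Wm_def ix_ixi mat_def axis_def)
    then show ?thesis by (simp add: vec_eq_iff)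
  qed
qed

lemma matrix_inv_id: "matrix_inv (mat 1 :: 'k::field^'n::finite^'n) = mat 1"
  using ip_unique[OF ip_matrix_inv ip_id] by (metis ip_id ip_invertible)

lemma sc_can: fixes S :: "('k::field,'n::finite) tensor"
  assumes n2: "CARD('n) \<ge> 2" and sc: "sc S" and b: "beta S \<noteq> 0"
  shows "good S" "can S = S"
  using sc_Wm[OF assms] b by (auto simp: good_def can_def matrix_inv_id actv_id)

lemma Bm_zero: "tau T = 0 \<Longrightarrow> Bm T = 0" by (simp add: Bm_def vec_eq_iff)

lemma beta_zero: fixes T :: "('k::field,'n::finite) tensor" shows "tau T = 0 \<Longrightarrow> beta T = 0"
proof -
  assume "tau T = 0"
  then have "Bm T = mat 0" by (simp add: Bm_zero mat_def vec_eq_iff)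
  then have "beta T = det (mat 0 :: 'k^'n^'n)" by (simp only: beta_def)
  also have "\<dots> = 0" by (rule det_0)
  finally show ?thesis .
qed

lemma Wm_sc: fixes S :: "('k::field,'n::finite) tensor"
  assumes n2: "CARD('n) \<ge> 2" and W: "Wm S = mat 1" and b: "beta S \<noteq> 0"
  shows "sc S"
proof -
  let ?n = "CARD('n)"
  have kry: "k < ?n \<Longrightarrow> kry S k = axis (ix k) 1" for k
  proof -
    assume k: "k < ?n"
    have "kry S k $ i = axis (ix k) 1 $ i" for i
    proof -
      have "Wm S $ i $ ix k = mat 1 $ i $ ix k" using W by simp
      then show ?thesis using k by (simp add: Wm_def ixi_ix mat_def axis_def)
    qed
    then show ?thesis by (simp add: vec_eq_iff)
  qed
  have w: "w1 S = axis (ix 0) 1" using kry[of 0] n2 by simp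
  have c1: "S(ix 0, ix k, c) = (if c = ix (k+1) then 1 else 0)" if "k < ?n - 1" for k c
  proof -
    have "kry S (Suc k) = axis (ix (k+1)) 1" using kry[of "Suc k"] that by simp
    then have "(\<chi> c. S(ix 0, ix k, c)) = (axis (ix (k+1)) 1 :: 'k^'n)"
      using kry[of k] that by (simp add: w Lm_axis_vec)
    then show ?thesis by (simp add: vec_eq_iff axis_def)
  qed
  have wp: "transpose (Bm S) *v axis (ix 0) 1 = tau S" using w1_prop[OF b] w by simp
  have Bt: "(\<Sum>c\<in>UNIV. S(ix 0, b', c) * tau S $ c) = tau S $ b'" for b'
  proof -
    have "(transpose (Bm S) *v axis (ix 0) 1) $ b' = Bm S $ ix 0 $ b'"
      by (simp add: matrix_vector_mult_def transpose_def axis_def if10_mult cong: if_cong)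
    then have "Bm S $ ix 0 $ b' = tau S $ b'" using wp by simp
    moreover have "Bm S $ ix 0 $ b' = (\<Sum>c\<in>UNIV. S(ix 0, b', c) * tau S $ c)" by (simp add: Bm_def)
    ultimately show ?thesis by metis
  qed
  have tk: "k < ?n \<Longrightarrow> tau S $ ix k = tau S $ ix 0" for k
  proof (induction k)
    case 0 then show ?case by simp
  next
    case (Suc k)
    then have "k < ?n - 1" by simp
    then have "tau S $ ix k = (\<Sum>c\<in>UNIV. (if c = ix (k+1) then 1 else 0) * tau S $ c)"
      using Bt[of "ix k"] c1 by simp
    also have "\<dots> = tau S $ ix (Suc k)" by (simp add: if10_mult)
    finally show ?case using Suc by simp
  qed
  have ta: "\<forall>a. tau S $ a = tau S $ ix 0"
  proof
    fix a :: 'n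
    obtain k where k: "k < ?n" "a = ix k" using ix_cases by blast
    then show "tau S $ a = tau S $ ix 0" using tk[of k] by simp
  qed
  have t0: "tau S $ ix 0 \<noteq> 0"
  proof
    assume z: "tau S $ ix 0 = 0"
    have "\<forall>a. tau S $ a = 0" using ta z by metis
    then have "tau S = 0" by (simp add: vec_eq_iff)
    then show False using b beta_zero by blast
  qed
  have "(\<Sum>c\<in>UNIV. S(ix 0, ix (?n-1), c)) * tau S $ ix 0 = (\<Sum>c\<in>UNIV. S(ix 0, ix (?n-1), c) * tau S $ ix 0)"
    by (rule sum_distrib_right)
  also have "\<dots> = (\<Sum>c\<in>UNIV. S(ix 0, ix (?n-1), c) * tau S $ c)"
    by (intro sum.cong refl) (metis ta)
  also have "\<dots> = tau S $ ix (?n-1)" by (rule Bt)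
  also have "\<dots> = tau S $ ix 0" by (rule ta[rule_format])
  finally have "(\<Sum>c\<in>UNIV. S(ix 0, ix (?n-1), c)) * tau S $ ix 0 = tau S $ ix 0" .
  then have s1: "(\<Sum>c\<in>UNIV. S(ix 0, ix (?n-1), c)) = 1" using t0 by simp
  show ?thesis unfolding sc_def
  proof (intro conjI)
    show "\<forall>k<?n - 1. \<forall>c. S (ix 0, ix k, c) = (if c = ix (k + 1) then 1 else 0)"
      using c1 by blast
  qed (rule ta, rule s1)
qed

lemma can_props: fixes T :: "('k::field,'n::finite) tensor"
  assumes n2: "CARD('n) \<ge> 2" and g: "good T"
  shows "good (can T)" "sc (can T)" "can (can T) = can T"
proof -
  have ip: "ip (matrix_inv (Wm T)) (Wm T)" using ip_sym[OF good_ip[OF g]] .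
  show gc: "good (can T)" unfolding can_def using good_actv[OF ip g] .
  have "Wm (can T) = matrix_inv (Wm T) ** Wm T" unfolding can_def
    using Wm_actv[OF ip] g by (simp add: good_def)
  then have "Wm (can T) = mat 1" using ip by (simp add: ip_def)
  then show "sc (can T)" using Wm_sc[OF n2] gc by (simp add: good_def)
  show "can (can T) = can T" unfolding can_def[of T] using can_actv[OF ip g] by (simp add: can_def)
qed


lemma orbit_can: fixes a b :: "('k::field,'n::finite) tensor"
  assumes ga: "good a" and gb: "good b"
  shows "orbit a = orbit b \<longleftrightarrow> can a = can b"
proof
  assume "orbit a = orbit b"
  then have "b \<in> orbit a" using orbit_eq_iff by blast
  then obtain G H where "ip G H" "b = actv G H a" by (auto simp: orbit_ip)
  then show "can a = can b" using can_actv ga by metis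
next
  assume eq: "can a = can b"
  have ipa: "ip (matrix_inv (Wm a)) (Wm a)" using ip_sym[OF good_ip[OF ga]] .
  have ipb: "ip (matrix_inv (Wm b)) (Wm b)" using ip_sym[OF good_ip[OF gb]] .
  have "can a \<in> orbit a" unfolding can_def using in_orbit[OF ipa] .
  moreover have "b \<in> orbit (can b)"
  proof -
    have "actv (Wm b) (matrix_inv (Wm b)) (can b) = b"
      unfolding can_def using ipb by (simp add: actv_comp ip_def actv_id)
    then show ?thesis using in_orbit[OF ip_sym[OF ipb]] by metis
  qed
  ultimately have o1: "orbit (can a) \<subseteq> orbit a" "b \<in> orbit (can b)" using orbit_sub[of "can a" a] by auto
  have "b \<in> orbit (can a)" using o1(2) eq by simp
  then have "b \<in> orbit a" using o1(1) by (rule subsetD[rotated])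
  then show "orbit a = orbit b" using orbit_eq_iff by blast
qed


lemma pf_det: fixes M :: "('x \<Rightarrow> 'k) \<Rightarrow> 'k::field^'n::finite^'n"
  assumes "\<And>i j. poly_fun S (\<lambda>T. M T $ i $ j)"
  shows "poly_fun S (\<lambda>T. det (M T))"
  unfolding det_def
  by (intro pf_sum pf_mult pf_prod pf_const assms) (simp_all add: finite_permutations)

definition ratw :: "(('x \<Rightarrow> 'k) \<Rightarrow> 'k) \<Rightarrow> (('x \<Rightarrow> 'k) \<Rightarrow> 'k::field) \<Rightarrow> bool" where
  "ratw D F \<longleftrightarrow> (\<exists>p k. poly_fun UNIV p \<and> (\<forall>T. D T \<noteq> 0 \<longrightarrow> F T = p T / D T ^ k))"

lemma ratw_poly: "poly_fun UNIV p \<Longrightarrow> ratw D p"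
  unfolding ratw_def by (rule exI[of _ p], rule exI[of _ 0]) simp

lemma ratw_const: "ratw D (\<lambda>T. c)" by (rule ratw_poly, rule pf_const)

lemma ratw_cong: "ratw D F \<Longrightarrow> (\<And>T. D T \<noteq> 0 \<Longrightarrow> F T = G T) \<Longrightarrow> ratw D G"
  unfolding ratw_def by metis

lemma ratw_add: assumes D: "poly_fun UNIV D" and "ratw D F" "ratw D G"
  shows "ratw D (\<lambda>T. F T + G T)"
proof -
  obtain p k q l where pk: "poly_fun UNIV p" "\<forall>T. D T \<noteq> 0 \<longrightarrow> F T = p T / D T ^ k"
     and ql: "poly_fun UNIV q" "\<forall>T. D T \<noteq> 0 \<longrightarrow> G T = q T / D T ^ l"
    using assms unfolding ratw_def by blast
  show ?thesis unfolding ratw_def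
  proof (intro exI conjI allI impI)
    show "poly_fun UNIV (\<lambda>T. p T * D T ^ l + q T * D T ^ k)"
      by (intro pf_add pf_mult pf_pow pk ql D)
    fix T assume "D T \<noteq> 0"
    then show "F T + G T = (p T * D T ^ l + q T * D T ^ k) / D T ^ (k + l)"
      using pk ql by (simp add: field_simps power_add)
  qed
qed

lemma ratw_mult: assumes D: "poly_fun UNIV D" and "ratw D F" "ratw D G"
  shows "ratw D (\<lambda>T. F T * G T)"
proof -
  obtain p k q l where pk: "poly_fun UNIV p" "\<forall>T. D T \<noteq> 0 \<longrightarrow> F T = p T / D T ^ k"
     and ql: "poly_fun UNIV q" "\<forall>T. D T \<noteq> 0 \<longrightarrow> G T = q T / D T ^ l"
    using assms unfolding ratw_def by blast
  show ?thesis unfolding ratw_def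
  proof (intro exI conjI allI impI)
    show "poly_fun UNIV (\<lambda>T. p T * q T)" by (intro pf_mult pk ql)
    fix T assume "D T \<noteq> 0"
    then show "F T * G T = (p T * q T) / D T ^ (k + l)"
      using pk ql by (simp add: field_simps power_add)
  qed
qed

lemma ratw_minus: assumes D: "poly_fun UNIV D" and "ratw D F" "ratw D G"
  shows "ratw D (\<lambda>T. F T - G T)"
proof -
  have "ratw D (\<lambda>T. F T + (-1) * G T)"
    by (intro ratw_add ratw_mult ratw_const assms)
  then show ?thesis by simp
qed

lemma ratw_sum: assumes D: "poly_fun UNIV D"
  shows "finite A \<Longrightarrow> (\<And>a. a \<in> A \<Longrightarrow> ratw D (F a)) \<Longrightarrow> ratw D (\<lambda>T. \<Sum>a\<in>A. F a T)"
proof (induction A rule: finite_induct)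
  case empty then show ?case using ratw_const[of D 0] by simp
next
  case (insert a A) then show ?case by (simp add: ratw_add[OF D])
qed

lemma ratw_prod: assumes D: "poly_fun UNIV D"
  shows "finite A \<Longrightarrow> (\<And>a. a \<in> A \<Longrightarrow> ratw D (F a)) \<Longrightarrow> ratw D (\<lambda>T. \<Prod>a\<in>A. F a T)"
proof (induction A rule: finite_induct)
  case empty then show ?case using ratw_const[of D 1] by simp
next
  case (insert a A) then show ?case by (simp add: ratw_mult[OF D])
qed

lemma ratw_det: fixes M :: "('x \<Rightarrow> 'k::field) \<Rightarrow> 'k^'n::finite^'n"
  assumes D: "poly_fun UNIV D" and M: "\<And>i j. ratw D (\<lambda>T. M T $ i $ j)"
  shows "ratw D (\<lambda>T. det (M T))"
  unfolding det_def
  by (intro ratw_sum[OF D] ratw_mult[OF D] ratw_prod[OF D] ratw_const M) (simp_all add: finite_permutations)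

lemma ratw_divD: assumes "ratw D F" shows "ratw D (\<lambda>T. F T / D T)"
proof -
  obtain p k where pk: "poly_fun UNIV p" "\<forall>T. D T \<noteq> 0 \<longrightarrow> F T = p T / D T ^ k"
    using assms unfolding ratw_def by blast
  show ?thesis unfolding ratw_def
    by (rule exI[of _ p], rule exI[of _ "Suc k"]) (simp add: pk)
qed

lemma ratw_div_poly: assumes "poly_fun UNIV q" shows "ratw D (\<lambda>T. q T / D T ^ j)"
  unfolding ratw_def using assms by blast

lemma ratw_mono: assumes "ratw D F" "poly_fun UNIV E"
  shows "ratw (\<lambda>T. D T * E T) F"
proof -
  obtain p k where pk: "poly_fun UNIV p" "\<forall>T. D T \<noteq> 0 \<longrightarrow> F T = p T / D T ^ k"
    using assms unfolding ratw_def by blast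
  show ?thesis unfolding ratw_def
  proof (intro exI conjI allI impI)
    show "poly_fun UNIV (\<lambda>T. p T * E T ^ k)" by (intro pf_mult pf_pow pk assms)
    fix T assume "D T * E T \<noteq> 0"
    then show "F T = p T * E T ^ k / (D T * E T) ^ k" using pk by (simp add: power_mult_distrib)
  qed
qed

lemma ratw_if: "ratw D F \<Longrightarrow> ratw D G \<Longrightarrow> ratw D (\<lambda>T. if P then F T else G T)"
  by (cases P) simp_all

lemma ratw_var: "ratw D (\<lambda>T. T x)" by (rule ratw_poly, rule pf_var) simp

lemma pf_tau: "poly_fun UNIV (\<lambda>T. tau T $ a)"
  unfolding tau_def by (simp, intro pf_sum pf_var) simp_all

lemma pf_Bm: "poly_fun UNIV (\<lambda>T. Bm T $ a $ b)"
  unfolding Bm_def by (simp, intro pf_sum pf_mult pf_var pf_tau) simp_all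

lemma pf_beta: "poly_fun UNIV (beta :: ('k::field,'n::finite) tensor \<Rightarrow> 'k)"
proof -
  have "poly_fun UNIV (\<lambda>T::('k,'n) tensor. det (Bm T))" by (rule pf_det, rule pf_Bm)
  then show ?thesis by (simp add: beta_def[abs_def])
qed

lemma ratw_Lm: fixes x y :: "('k::field,'n::finite) tensor \<Rightarrow> 'k^'n"
  assumes D: "poly_fun UNIV D" and "\<And>a. ratw D (\<lambda>T. x T $ a)" "\<And>a. ratw D (\<lambda>T. y T $ a)"
  shows "ratw D (\<lambda>T. Lm T (x T) (y T) $ c)"
  unfolding Lm_def by (simp, intro ratw_sum[OF D] ratw_mult[OF D] ratw_var assms) simp_all

lemma ratw_w1: "ratw beta (\<lambda>T::('k::field,'n::finite) tensor. w1 T $ a)"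
proof -
  have h: "\<And>i j. ratw beta (\<lambda>T::('k,'n) tensor. if j = a then tau T $ i else transpose (Bm T) $ i $ j)"
    by (intro ratw_if) (simp_all add: transpose_def ratw_poly pf_tau pf_Bm)
  have "ratw beta (\<lambda>T::('k,'n) tensor. det (\<chi> i j. if j = a then tau T $ i else transpose (Bm T) $ i $ j))"
    by (rule ratw_det[OF pf_beta]) (simp add: h)
  then show ?thesis using ratw_divD by (fastforce simp: w1_def)
qed

lemma ratw_kry: "ratw beta (\<lambda>T. kry T k $ a)"
proof (induction k arbitrary: a)
  case 0 then show ?case by (simp add: ratw_w1)
next
  case (Suc k) then show ?case by (simp, intro ratw_Lm[OF pf_beta] ratw_w1)
qed

lemma ratw_Wm: "ratw beta (\<lambda>T. Wm T $ i $ j)"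
  unfolding Wm_def by (simp add: ratw_kry)

lemma ratw_detW: "ratw beta (\<lambda>T. det (Wm T))"
  by (rule ratw_det[OF pf_beta ratw_Wm])

lemma minv_cramer: fixes W :: "'k::field^'n::finite^'n"
  assumes "det W \<noteq> 0"
  shows "(matrix_inv W *v v) $ c = det (\<chi> i j. if j = c then v $ i else W $ i $ j) / det W"
proof -
  have "ip W (matrix_inv W)" using assms ip_matrix_inv invertible_det_nz by blast
  then have "W *v (matrix_inv W *v v) = v" by (simp add: matrix_vector_mul_assoc ip_def)
  then have "matrix_inv W *v v = (\<chi> k. det (\<chi> i j. if j = k then v $ i else W $ i $ j) / det W)"
    using cramer[OF assms] by blast
  then show ?thesis by simp
qed

lemma can_formula: fixes T :: "('k::field,'n::finite) tensor"
  assumes "det (Wm T) \<noteq> 0"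
  shows "can T (a,b,c) = det (\<chi> i j. if j = c then Lm T (column a (Wm T)) (column b (Wm T)) $ i else Wm T $ i $ j) / det (Wm T)"
  unfolding can_def actv_Lm using minv_cramer[OF assms] by simp

lemma ratw_can:
  fixes pd :: "('k::field,'n::finite) tensor \<Rightarrow> 'k"
  assumes pd: "poly_fun UNIV pd" and dW: "\<And>T. beta T \<noteq> 0 \<Longrightarrow> det (Wm T) = pd T / beta T ^ kd"
  shows "ratw (\<lambda>T. beta T * pd T) (\<lambda>T. can T x)"
proof -
  let ?D = "\<lambda>T. beta T * pd T"
  have D: "poly_fun UNIV ?D" by (intro pf_mult pf_beta pd)
  have W: "ratw ?D (\<lambda>T. Wm T $ i $ j)" for i j by (rule ratw_mono[OF ratw_Wm pd])
  have col: "ratw ?D (\<lambda>T. column a (Wm T) $ i)" for a i by (simp add: column_def W)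
  have num: "ratw ?D (\<lambda>T. det (\<chi> i j. if j = c then Lm T (column a (Wm T)) (column b (Wm T)) $ i else Wm T $ i $ j))" for a b c
    by (rule ratw_det[OF D], simp, intro ratw_if) (simp_all add: W ratw_Lm[OF D col col])
  have inv: "ratw ?D (\<lambda>T. beta T ^ (Suc kd) / ?D T ^ 1)"
    by (rule ratw_div_poly, intro pf_pow pf_beta)
  obtain a b c where x: "x = (a,b,c)" by (cases x) auto
  have "ratw ?D (\<lambda>T. det (\<chi> i j. if j = c then Lm T (column a (Wm T)) (column b (Wm T)) $ i else Wm T $ i $ j) * (beta T ^ (Suc kd) / ?D T ^ 1))"
    by (rule ratw_mult[OF D num inv])
  then show ?thesis
  proof (rule ratw_cong)
    fix T assume "?D T \<noteq> 0"
    then have b: "beta T \<noteq> 0" "pd T \<noteq> 0" by auto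
    then have "det (Wm T) \<noteq> 0" using dW by simp
    then show "det (\<chi> i j. if j = c then Lm T (column a (Wm T)) (column b (Wm T)) $ i else Wm T $ i $ j) * (beta T ^ (Suc kd) / ?D T ^ 1) = can T x"
      using b by (simp add: x can_formula dW field_simps)
  qed
qed


definition Dset :: "('n::finite \<times> 'n \<times> 'n) set" where
  "Dset = {(ix 0, b, c) | b c. b \<noteq> ix (CARD('n) - 1)} \<union> {(ix 0, ix (CARD('n) - 1), ix 0)}
        \<union> {(a, ix (CARD('n) - 1), ix (CARD('n) - 1)) | a. a \<noteq> ix 0}"

definition Fset :: "('n::finite \<times> 'n \<times> 'n) set" where
  "Fset = UNIV - Dset"

lemma ix0_ne_last: "CARD('n::finite) \<ge> 2 \<Longrightarrow> (ix 0 :: 'n) \<noteq> ix (CARD('n) - 1)"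
  using ix_inj[where 'n='n, of 0 "CARD('n) - 1"] by auto

lemma card_Dset: assumes n2: "CARD('n::finite) \<ge> 2"
  shows "card (Dset :: ('n \<times> 'n \<times> 'n) set) = CARD('n) ^ 2"
proof -
  let ?l = "ix (CARD('n) - 1) :: 'n" and ?e = "ix 0 :: 'n"
  define \<phi> where "\<phi> = (\<lambda>(b,c). if b \<noteq> ?l then (?e, b, c) else if c = ?e then (?e, ?l, ?e) else (c, ?l, ?l))"
  have ne: "?e \<noteq> ?l" by (rule ix0_ne_last[OF n2])
  have inj: "inj \<phi>" unfolding inj_def \<phi>_def using ne by (auto split: if_splits)
  have img: "\<phi> ` UNIV = Dset"
  proof
    show "\<phi> ` UNIV \<subseteq> Dset"
    proof (rule image_subsetI)
      fix x :: "'n \<times> 'n" assume "x \<in> UNIV"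
      obtain b c where x: "x = (b, c)" by (cases x) auto
      have "\<phi> (b, c) \<in> Dset"
      proof (cases "b \<noteq> ?l")
        case True
        then have "\<phi> (b, c) = (?e, b, c)" by (simp add: \<phi>_def)
        then show ?thesis using True unfolding Dset_def by blast
      next
        case F: False
        show ?thesis
        proof (cases "c = ?e")
          case True
          then have "\<phi> (b, c) = (?e, ?l, ?e)" using F by (simp add: \<phi>_def)
          then show ?thesis unfolding Dset_def by blast
        next
          case False
          then have "\<phi> (b, c) = (c, ?l, ?l)" using F by (simp add: \<phi>_def)
          then show ?thesis using False unfolding Dset_def by blast
        qed
      qed
      then show "\<phi> x \<in> Dset" using x by simp
    qed
    show "Dset \<subseteq> \<phi> ` UNIV"
    proof
      fix x assume "x \<in> (Dset :: ('n \<times> 'n \<times> 'n) set)"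
      then consider b c where "x = (?e, b, c)" "b \<noteq> ?l" | "x = (?e, ?l, ?e)" | a where "x = (a, ?l, ?l)" "a \<noteq> ?e"
        unfolding Dset_def by blast
      then show "x \<in> \<phi> ` UNIV"
      proof cases
        case (1 b c) then show ?thesis unfolding \<phi>_def by (intro image_eqI[of _ _ "(b,c)"]) auto
      next
        case 2 then show ?thesis unfolding \<phi>_def by (intro image_eqI[of _ _ "(?l,?e)"]) auto
      next
        case (3 a) then show ?thesis unfolding \<phi>_def using ne by (intro image_eqI[of _ _ "(?l,a)"]) auto
      qed
    qed
  qed
  have "card (Dset :: ('n \<times> 'n \<times> 'n) set) = card (UNIV :: ('n \<times> 'n) set)"
    using card_image[OF inj_on_subset[OF inj subset_UNIV]] img by metis
  then show ?thesis by (simp add: card_cartesian_product power2_eq_square)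
qed

lemma card_Fset: assumes n2: "CARD('n::finite) \<ge> 2"
  shows "card (Fset :: ('n \<times> 'n \<times> 'n) set) = CARD('n) ^ 3 - CARD('n) ^ 2"
proof -
  have "card (Fset :: ('n \<times> 'n \<times> 'n) set) = card (UNIV :: ('n \<times> 'n \<times> 'n) set) - card (Dset :: ('n \<times> 'n \<times> 'n) set)"
    unfolding Fset_def by (rule card_Diff_subset) auto
  then show ?thesis using card_Dset[OF n2] by (simp add: card_cartesian_product power3_eq_cube)
qed

definition Phi :: "('n::finite \<times> 'n \<times> 'n \<Rightarrow> nat) \<Rightarrow> (nat \<Rightarrow> 'k::field) \<Rightarrow> ('k,'n) tensor" where
  "Phi xi y = (\<lambda>(a,b,c).
     if a = ix 0 \<and> b \<noteq> ix (CARD('n) - 1) then (if c = ix (ixi b + 1) then 1 else 0)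
     else if a = ix 0 \<and> b = ix (CARD('n) - 1) \<and> c = ix 0 then 1 - (\<Sum>c'\<in>UNIV - {ix 0}. y (xi (ix 0, ix (CARD('n) - 1), c')))
     else if a \<noteq> ix 0 \<and> b = ix (CARD('n) - 1) \<and> c = ix (CARD('n) - 1)
       then y (xi (ix 0, ix (CARD('n) - 1), ix (CARD('n) - 1))) - (\<Sum>b'\<in>UNIV - {ix (CARD('n) - 1)}. y (xi (a, b', b')))
     else y (xi (a,b,c)))"

lemma Phi_1: "a = ix 0 \<Longrightarrow> b \<noteq> ix (CARD('n) - 1) \<Longrightarrow>
  Phi xi y (a,b,c) = (if c = ix (ixi b + 1) then 1 else (0::'k::field))" for a b c :: "'n::finite"
  by (simp add: Phi_def)
lemma Phi_2: "a = ix 0 \<Longrightarrow> b = ix (CARD('n) - 1) \<Longrightarrow> c = ix 0 \<Longrightarrow>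
  Phi xi y (a,b,c) = 1 - (\<Sum>c'\<in>UNIV - {ix 0}. (y (xi (ix 0, ix (CARD('n) - 1), c')) :: 'k::field))" for a b c :: "'n::finite"
  by (simp add: Phi_def)
lemma Phi_3: "a \<noteq> ix 0 \<Longrightarrow> b = ix (CARD('n) - 1) \<Longrightarrow> c = ix (CARD('n) - 1) \<Longrightarrow>
  Phi xi y (a,b,c) = (y (xi (ix 0, ix (CARD('n) - 1), ix (CARD('n) - 1))) :: 'k::field) - (\<Sum>b'\<in>UNIV - {ix (CARD('n) - 1)}. y (xi (a, b', b')))" for a b c :: "'n::finite"
  by (simp add: Phi_def)
lemma Phi_4: "\<not> (a = ix 0 \<and> b \<noteq> ix (CARD('n) - 1)) \<Longrightarrow> \<not> (a = ix 0 \<and> b = ix (CARD('n) - 1) \<and> c = ix 0) \<Longrightarrow>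
   \<not> (a \<noteq> ix 0 \<and> b = ix (CARD('n) - 1) \<and> c = ix (CARD('n) - 1)) \<Longrightarrow>
  Phi xi y (a,b,c) = (y (xi (a,b,c)) :: 'k::field)" for a b c :: "'n::finite"
  unfolding Phi_def by (simp only: prod.case if_False)

lemma ix_succ_ne: assumes "(b::'n::finite) \<noteq> ix (CARD('n) - 1)" shows "b \<noteq> ix (Suc (ixi b))"
proof -
  have "ixi b < CARD('n)" by (rule ixi_lt)
  moreover have "ixi b \<noteq> CARD('n) - 1" using assms ix_ixi by metis
  ultimately have "ixi b + 1 < CARD('n)" by simp
  then have "ixi (ix (ixi b + 1) :: 'n) = ixi b + 1" by (rule ixi_ix)
  then show ?thesis by auto
qed

lemma sum_split1: "(\<Sum>x\<in>UNIV. f x) = f a + (\<Sum>x\<in>UNIV - {a}. f (x::'a::finite))"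
  by (simp add: sum.remove)

lemma sc_Phi: fixes y :: "nat \<Rightarrow> 'k::field" and xi :: "'n::finite \<times> 'n \<times> 'n \<Rightarrow> nat"
  assumes n2: "CARD('n::finite) \<ge> 2"
  shows "sc (Phi xi y :: ('k,'n) tensor)"
proof -
  let ?l = "ix (CARD('n) - 1) :: 'n" and ?e = "ix 0 :: 'n" and ?S = "Phi xi y :: ('k,'n) tensor"
  have ne: "?e \<noteq> ?l" by (rule ix0_ne_last[OF n2])
  let ?t = "y (xi (?e, ?l, ?l))"
  have c1: "\<forall>k<CARD('n)-1. \<forall>c. ?S(?e, ix k, c) = (if c = ix (k+1) then 1 else 0)"
  proof (intro allI impI)
    fix k c assume k: "k < CARD('n) - 1"
    then have "ix k \<noteq> ?l" using ix_inj[where 'n='n, of k "CARD('n) - 1"] by auto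
    moreover have "ixi (ix k :: 'n) = k" using k by (intro ixi_ix) simp
    ultimately show "?S(?e, ix k, c) = (if c = ix (k+1) then 1 else 0)" by (simp add: Phi_def)
  qed
  have te: "tau ?S $ ?e = ?t"
  proof -
    have "tau ?S $ ?e = ?S (?e, ?l, ?l) + (\<Sum>b\<in>UNIV - {?l}. ?S (?e, b, b))"
      unfolding tau_def by (simp add: sum_split1[of _ ?l])
    also have "(\<Sum>b\<in>UNIV - {?l}. ?S (?e, b, b)) = 0"
    proof (intro sum.neutral ballI)
      fix b assume "b \<in> UNIV - {?l}"
      then have bl: "b \<noteq> ?l" by simp
      show "?S (?e, b, b) = 0" using Phi_1[of ?e b xi y b] ix_succ_ne[OF bl] bl by simp
    qed
    finally show ?thesis using ne by (simp add: Phi_def)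
  qed
  have ta: "tau ?S $ a = tau ?S $ ?e" for a
  proof (cases "a = ?e")
    case False
    have "tau ?S $ a = ?S (a, ?l, ?l) + (\<Sum>b\<in>UNIV - {?l}. ?S (a, b, b))"
      unfolding tau_def by (simp add: sum_split1[of _ ?l])
    also have "(\<Sum>b\<in>UNIV - {?l}. ?S (a, b, b)) = (\<Sum>b\<in>UNIV - {?l}. y (xi (a, b, b)))"
      using False by (intro sum.cong refl) (auto simp: Phi_def)
    finally show ?thesis using False te by (simp add: Phi_def)
  qed simp
  have s3: "(\<Sum>c\<in>UNIV. ?S(?e, ?l, c)) = 1"
  proof -
    have "(\<Sum>c\<in>UNIV. ?S(?e, ?l, c)) = ?S(?e, ?l, ?e) + (\<Sum>c\<in>UNIV - {?e}. ?S(?e, ?l, c))"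
      by (simp add: sum_split1[of _ ?e])
    also have "(\<Sum>c\<in>UNIV - {?e}. ?S(?e, ?l, c)) = (\<Sum>c\<in>UNIV - {?e}. y (xi (?e, ?l, c)))"
      by (intro sum.cong refl) (auto simp: Phi_def)
    finally show ?thesis by (simp add: Phi_def)
  qed
  show ?thesis unfolding sc_def using c1 ta s3 by blast
qed

lemma Phi_recover: fixes S :: "('k::field,'n::finite) tensor"
  assumes n2: "CARD('n) \<ge> 2" and sc: "sc S" and en: "\<And>t. t \<in> Fset \<Longrightarrow> en (xi t) = t"
  shows "Phi xi (\<lambda>i. S (en i)) = S"
proof (rule ext, clarify)
  let ?l = "ix (CARD('n) - 1) :: 'n" and ?e = "ix 0 :: 'n"
  have ne: "?e \<noteq> ?l" by (rule ix0_ne_last[OF n2])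
  have c1: "\<And>k c. k < CARD('n)-1 \<Longrightarrow> S(?e, ix k, c) = (if c = ix (k+1) then 1 else 0)"
   and ta: "\<And>a. tau S $ a = tau S $ ?e"
   and s3: "(\<Sum>c\<in>UNIV. S(?e, ?l, c)) = 1" using sc unfolding sc_def by blast+
  have inF: "(a,b,c) \<in> Fset \<longleftrightarrow> \<not> (a = ?e \<and> b \<noteq> ?l) \<and> \<not> (a = ?e \<and> b = ?l \<and> c = ?e) \<and> \<not> (a \<noteq> ?e \<and> b = ?l \<and> c = ?l)" for a b c
    unfolding Fset_def Dset_def by auto
  fix a b c :: 'n
  show "Phi xi (\<lambda>i. S (en i)) (a, b, c) = S (a, b, c)"
  proof (cases "a = ?e \<and> b \<noteq> ?l")
    case True
    have k: "ixi b < CARD('n) - 1"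
    proof -
      have "ixi b < CARD('n)" by (rule ixi_lt)
      moreover have "ixi b \<noteq> CARD('n) - 1" using True ix_ixi by metis
      ultimately show ?thesis by simp
    qed
    show ?thesis using True c1[OF k, of c] by (simp add: Phi_def ix_ixi)
  next
    case F1: False
    show ?thesis
    proof (cases "a = ?e \<and> b = ?l \<and> c = ?e")
      case True
      have "(\<Sum>c'\<in>UNIV - {?e}. S (en (xi (?e, ?l, c')))) = (\<Sum>c'\<in>UNIV - {?e}. S (?e, ?l, c'))"
        using ne by (intro sum.cong refl) (simp add: en inF)
      moreover have "S(?e, ?l, ?e) + (\<Sum>c\<in>UNIV - {?e}. S(?e, ?l, c)) = 1"
        using s3 by (simp add: sum_split1[of _ ?e])
      ultimately show ?thesis using True by (simp add: Phi_def algebra_simps)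
    next
      case F2: False
      show ?thesis
      proof (cases "a \<noteq> ?e \<and> b = ?l \<and> c = ?l")
        case True
        have e1: "S (en (xi (?e, ?l, ?l))) = S (?e, ?l, ?l)" using ne by (simp add: en inF)
        have e2: "(\<Sum>b'\<in>UNIV - {?l}. S (en (xi (a, b', b')))) = (\<Sum>b'\<in>UNIV - {?l}. S (a, b', b'))"
          using True by (intro sum.cong refl) (simp add: en inF)
        have te: "tau S $ ?e = S (?e, ?l, ?l)"
        proof -
          have "tau S $ ?e = S (?e, ?l, ?l) + (\<Sum>b\<in>UNIV - {?l}. S (?e, b, b))"
            unfolding tau_def by (simp add: sum_split1[of _ ?l])
          also have "(\<Sum>b\<in>UNIV - {?l}. S (?e, b, b)) = 0"
          proof (intro sum.neutral ballI)
            fix b' assume "b' \<in> UNIV - {?l}"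
            then have bl: "b' \<noteq> ?l" by simp
            have k: "ixi b' < CARD('n) - 1"
            proof -
              have "ixi b' < CARD('n)" by (rule ixi_lt)
              moreover have "ixi b' \<noteq> CARD('n) - 1" using bl ix_ixi by metis
              ultimately show ?thesis by simp
            qed
            show "S (?e, b', b') = 0" using c1[OF k, of b'] ix_succ_ne[OF bl] by (simp add: ix_ixi)
          qed
          finally show ?thesis by simp
        qed
        have "tau S $ a = S (a, ?l, ?l) + (\<Sum>b\<in>UNIV - {?l}. S (a, b, b))"
          unfolding tau_def by (simp add: sum_split1[of _ ?l])
        then have "S (?e, ?l, ?l) - (\<Sum>b\<in>UNIV - {?l}. S (a, b, b)) = S (a, ?l, ?l)"
          using ta[of a] te by simp
        then show ?thesis using True e1 e2 by (simp add: Phi_def)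
      next
        case False
        then have "(a,b,c) \<in> Fset" using F1 F2 inF by blast
        then show ?thesis using F1 F2 False by (simp add: Phi_4 en)
      qed
    qed
  qed
qed

lemma pf_Phi: fixes xi :: "'n::finite \<times> 'n \<times> 'n \<Rightarrow> nat" and t :: "'n \<times> 'n \<times> 'n"
  assumes n2: "CARD('n) \<ge> 2" and xi: "\<And>t. t \<in> Fset \<Longrightarrow> xi t \<in> S"
  shows "poly_fun S (\<lambda>y::nat \<Rightarrow> 'k::field. Phi xi y t)"
proof -
  let ?l = "ix (CARD('n) - 1) :: 'n" and ?e = "ix 0 :: 'n"
  obtain a b c where t: "t = (a,b,c)" by (cases t) auto
  have inF: "(a,b,c) \<in> Fset \<longleftrightarrow> \<not> (a = ?e \<and> b \<noteq> ?l) \<and> \<not> (a = ?e \<and> b = ?l \<and> c = ?e) \<and> \<not> (a \<noteq> ?e \<and> b = ?l \<and> c = ?l)" for a b c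
    unfolding Fset_def Dset_def by auto
  consider (1) "a = ?e \<and> b \<noteq> ?l" | (2) "a = ?e \<and> b = ?l \<and> c = ?e" | (3) "a \<noteq> ?e \<and> b = ?l \<and> c = ?l"
    | (4) "\<not> (a = ?e \<and> b \<noteq> ?l)" "\<not> (a = ?e \<and> b = ?l \<and> c = ?e)" "\<not> (a \<noteq> ?e \<and> b = ?l \<and> c = ?l)"
    by blast
  then show ?thesis
  proof cases
    case 1 then show ?thesis unfolding t by (simp add: Phi_1 pf_const)
  next
    case 2
    have "poly_fun S (\<lambda>y::nat \<Rightarrow> 'k. 1 - (\<Sum>c'\<in>UNIV - {?e}. y (xi (?e, ?l, c'))))"
      by (intro pf_minus pf_const pf_sum pf_var xi) (auto simp: inF)
    then show ?thesis unfolding t using 2 by (simp only: Phi_2)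
  next
    case 3
    have "poly_fun S (\<lambda>y::nat \<Rightarrow> 'k. y (xi (?e, ?l, ?l)) - (\<Sum>b'\<in>UNIV - {?l}. y (xi (a, b', b'))))"
      using 3 ix0_ne_last[OF n2] by (intro pf_minus pf_const pf_sum pf_var xi) (auto simp: inF)
    then show ?thesis unfolding t using 3 by (simp add: Phi_3)
  next
    case 4
    have "poly_fun S (\<lambda>y::nat \<Rightarrow> 'k. y (xi (a,b,c)))"
      using 4 by (intro pf_var xi) (simp add: inF)
    moreover have "\<And>y. Phi xi y (a,b,c) = (y (xi (a,b,c)) :: 'k)" by (rule Phi_4[OF 4])
    ultimately show ?thesis unfolding t by simp
  qed
qed


definition Exm :: "('k::field,'n::finite) tensor" where
  "Exm = (\<lambda>(a,b,c). if a = ix 0 then (if b \<noteq> ix (CARD('n) - 1) then (if c = ix (ixi b + 1) then 1 else 0)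
                     else (if c = ix (CARD('n) - 1) then 1 else 0))
                   else (if b = a \<and> c = a then 1 else 0))"

lemma tau_Ex: assumes n2: "CARD('n::finite) \<ge> 2"
  shows "tau (Exm :: ('k::field,'n) tensor) $ a = 1"
proof -
  let ?l = "ix (CARD('n) - 1) :: 'n" and ?e = "ix 0 :: 'n"
  have ne: "?e \<noteq> ?l" by (rule ix0_ne_last[OF n2])
  show ?thesis
  proof (cases "a = ?e")
    case True
    have "tau (Exm :: ('k,'n) tensor) $ a = Exm (?e, ?l, ?l) + (\<Sum>b\<in>UNIV - {?l}. (Exm :: ('k,'n) tensor) (?e, b, b))"
      unfolding tau_def using True by (simp add: sum_split1[of _ ?l])
    also have "(\<Sum>b\<in>UNIV - {?l}. (Exm :: ('k,'n) tensor) (?e, b, b)) = 0"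
    proof (intro sum.neutral ballI)
      fix b assume "b \<in> UNIV - {?l}"
      then have bl: "b \<noteq> ?l" by simp
      show "(Exm :: ('k,'n) tensor) (?e, b, b) = 0" using ix_succ_ne[OF bl] bl by (simp add: Exm_def)
    qed
    finally show ?thesis by (simp add: Exm_def)
  next
    case False
    have "tau (Exm :: ('k,'n) tensor) $ a = (\<Sum>b\<in>UNIV. (Exm :: ('k,'n) tensor) (a,b,b))" by (simp add: tau_def)
    also have "\<dots> = (\<Sum>b\<in>UNIV. if b = a then 1 else 0)"
      by (intro sum.cong refl) (simp add: Exm_def False)
    finally show ?thesis by simp
  qed
qed

lemma sc_Ex: assumes n2: "CARD('n::finite) \<ge> 2"
  shows "sc (Exm :: ('k::field,'n) tensor)"
proof -
  let ?l = "ix (CARD('n) - 1) :: 'n" and ?e = "ix 0 :: 'n"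
  have c1: "\<forall>k<CARD('n)-1. \<forall>c. (Exm :: ('k,'n) tensor)(?e, ix k, c) = (if c = ix (k+1) then 1 else 0)"
  proof (intro allI impI)
    fix k c assume k: "k < CARD('n) - 1"
    then have "ix k \<noteq> ?l" using ix_inj[where 'n='n, of k "CARD('n) - 1"] by auto
    moreover have "ixi (ix k :: 'n) = k" using k by (intro ixi_ix) simp
    ultimately show "(Exm :: ('k,'n) tensor)(?e, ix k, c) = (if c = ix (k+1) then 1 else 0)" by (simp add: Exm_def)
  qed
  have s3: "(\<Sum>c\<in>UNIV. (Exm :: ('k,'n) tensor)(?e, ?l, c)) = 1"
  proof -
    have "(\<Sum>c\<in>UNIV. (Exm :: ('k,'n) tensor)(?e, ?l, c)) = (\<Sum>c\<in>UNIV. if c = ?l then 1 else 0)"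
      by (intro sum.cong refl) (simp add: Exm_def)
    then show ?thesis by simp
  qed
  have "\<forall>a. tau (Exm :: ('k,'n) tensor) $ a = tau (Exm :: ('k,'n) tensor) $ ?e" by (intro allI) (simp add: tau_Ex[OF n2])
  then show ?thesis unfolding sc_def using c1 s3 by blast
qed

lemma Bm_Ex: assumes n2: "CARD('n::finite) \<ge> 2"
  shows "Bm (Exm :: ('k::field,'n) tensor) $ a $ b = (if a = ix 0 then 1 else if b = a then 1 else 0)"
proof -
  let ?l = "ix (CARD('n) - 1) :: 'n" and ?e = "ix 0 :: 'n"
  have "Bm (Exm :: ('k,'n) tensor) $ a $ b = (\<Sum>c\<in>UNIV. (Exm :: ('k,'n) tensor)(a,b,c))"
    by (simp add: Bm_def tau_Ex[OF n2])
  also have "\<dots> = (if a = ix 0 then 1 else if b = a then 1 else 0)"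
  proof (cases "a = ?e")
    case True
    show ?thesis
    proof (cases "b = ?l")
      case T2: True
      have "(\<Sum>c\<in>UNIV. (Exm :: ('k,'n) tensor)(a,b,c)) = (\<Sum>c\<in>UNIV. if c = ?l then 1 else 0)"
        by (intro sum.cong refl) (simp add: Exm_def T2 True)
      then show ?thesis using \<open>a = ?e\<close> by simp
    next
      case F2: False
      have "(\<Sum>c\<in>UNIV. (Exm :: ('k,'n) tensor)(a,b,c)) = (\<Sum>c::'n\<in>UNIV. if c = ix (ixi b + 1) then 1 else 0)"
        by (intro sum.cong refl) (simp add: Exm_def F2[simplified] True)
      then show ?thesis using \<open>a = ?e\<close> by simp
    qed
  next
    case False
    have "(\<Sum>c\<in>UNIV. (Exm :: ('k,'n) tensor)(a,b,c)) = (\<Sum>c\<in>UNIV. if c = a then (if b = a then 1 else 0) else 0)"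
      by (intro sum.cong refl) (auto simp: Exm_def False)
    then show ?thesis using False by simp
  qed
  finally show ?thesis .
qed

lemma beta_Ex: assumes n2: "CARD('n::finite) \<ge> 2"
  shows "beta (Exm :: ('k::field,'n) tensor) \<noteq> 0"
proof -
  let ?e = "ix 0 :: 'n"
  let ?M = "Bm (Exm :: ('k,'n) tensor)"
  define N :: "'k^'n^'n" where "N = (\<chi> i j. if i = ?e then (if j = ?e then 1 else -1) else (if i = j then 1 else 0))"
  have M: "?M $ i $ j = (if i = ?e then 1 else if j = i then 1 else 0)" for i j by (rule Bm_Ex[OF n2])
  have MN: "(?M ** N) $ i $ j = mat 1 $ i $ j" for i j
  proof (cases "i = ?e")
    case True
    have "(?M ** N) $ i $ j = (\<Sum>k\<in>UNIV. N $ k $ j)" using True by (simp add: matrix_matrix_mult_def M)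
    also have "\<dots> = N $ ?e $ j + (\<Sum>k\<in>UNIV - {?e}. N $ k $ j)" by (rule sum_split1)
    also have "(\<Sum>k\<in>UNIV - {?e}. N $ k $ j) = (\<Sum>k\<in>UNIV - {?e}. if k = j then 1 else 0)"
      by (intro sum.cong refl) (auto simp: N_def)
    also have "\<dots> = (if j = ?e then 0 else 1)" by (simp add: sum.delta_remove)
    finally show ?thesis using True by (simp add: N_def mat_def)
  next
    case False
    have "(?M ** N) $ i $ j = (\<Sum>k\<in>UNIV. ?M $ i $ k * N $ k $ j)" by (simp add: matrix_matrix_mult_def)
    also have "\<dots> = (\<Sum>k\<in>UNIV. (if k = i then 1 else 0) * N $ k $ j)"
      by (intro sum.cong refl) (simp add: M False)
    also have "\<dots> = N $ i $ j" by (simp add: if10_mult)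
    finally show ?thesis using False by (simp add: N_def mat_def)
  qed
  have NM: "(N ** ?M) $ i $ j = mat 1 $ i $ j" for i j
  proof (cases "i = ?e")
    case True
    have "(N ** ?M) $ i $ j = ?M $ ?e $ j + (\<Sum>k\<in>UNIV - {?e}. N $ ?e $ k * ?M $ k $ j)"
      using True by (simp add: matrix_matrix_mult_def sum_split1[of _ ?e] N_def)
    also have "(\<Sum>k\<in>UNIV - {?e}. N $ ?e $ k * ?M $ k $ j) = (\<Sum>k\<in>UNIV - {?e}. if k = j then -1 else 0)"
      by (intro sum.cong refl) (auto simp: N_def M)
    also have "\<dots> = (if j = ?e then 0 else -1)" by (simp add: sum.delta_remove)
    finally show ?thesis using True by (simp add: M mat_def)
  next
    case False
    have "(N ** ?M) $ i $ j = (\<Sum>k\<in>UNIV. N $ i $ k * ?M $ k $ j)" by (simp add: matrix_matrix_mult_def)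
    also have "\<dots> = (\<Sum>k\<in>UNIV. (if i = k then 1 else 0) * ?M $ k $ j)"
      by (intro sum.cong refl) (simp add: N_def False)
    also have "\<dots> = ?M $ i $ j" by (simp add: if10_mult)
    finally show ?thesis using False by (simp add: M mat_def)
  qed
  have "ip ?M N" unfolding ip_def using MN NM by (simp add: vec_eq_iff)
  then show ?thesis unfolding beta_def by (rule ip_det)
qed

lemma good_Ex: assumes n2: "CARD('n::finite) \<ge> 2"
  shows "good (Exm :: ('k::field,'n) tensor)"
  using sc_can(1)[OF n2 sc_Ex[OF n2] beta_Ex[OF n2]] .

lemma Phi_F: fixes t :: "'n::finite \<times> 'n \<times> 'n" and xi :: "'n \<times> 'n \<times> 'n \<Rightarrow> nat" and y :: "nat \<Rightarrow> 'k::field"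
  assumes "t \<in> Fset" shows "Phi xi y t = y (xi t)"
proof -
  obtain a b c where t: "t = (a,b,c)" by (cases t) auto
  have "\<not> (a = ix 0 \<and> b \<noteq> ix (CARD('n) - 1)) \<and> \<not> (a = ix 0 \<and> b = ix (CARD('n) - 1) \<and> c = ix 0) \<and>
     \<not> (a \<noteq> ix 0 \<and> b = ix (CARD('n) - 1) \<and> c = ix (CARD('n) - 1))"
    using assms unfolding t Fset_def Dset_def by auto
  then show ?thesis unfolding t by (intro Phi_4) auto
qed

lemma Phi_dep: fixes xi :: "'n::finite \<times> 'n \<times> 'n \<Rightarrow> nat"
  assumes n2: "CARD('n) \<ge> 2" and xi: "\<And>t. t \<in> Fset \<Longrightarrow> xi t \<in> S" and eq: "\<And>i. i \<in> S \<Longrightarrow> y i = y' i"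
  shows "(Phi xi y :: ('k::field,'n) tensor) = Phi xi y'"
proof
  fix t show "(Phi xi y :: ('k::field,'n) tensor) t = Phi xi y' t"
    using pf_dep[OF pf_Phi[OF n2 xi, where t = t] eq] by simp
qed

lemma pf_actv: fixes T :: "('v \<Rightarrow> 'k) \<Rightarrow> ('k::field,'n::finite) tensor"
  assumes "\<And>x. poly_fun S (\<lambda>y. T y x)"
  shows "poly_fun S (\<lambda>y. actv G H (T y) t)"
proof -
  obtain i j l where t: "t = (i,j,l)" by (cases t) auto
  show ?thesis unfolding t actv_def
    by (simp, intro pf_sum pf_mult pf_const assms) simp_all
qed


lemma main2:
  assumes alg: "alg_closed_field TYPE('k::field)" and n2: "CARD('n::finite) \<ge> 2"
  shows "\<exists>(f :: nat \<Rightarrow> (('k,'n) tensor \<Rightarrow> 'k) \<times> (('k,'n) tensor \<Rightarrow> 'k))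
        (h :: nat \<Rightarrow> ('k,'n) tensor \<Rightarrow> 'k) (K :: nat).
        let N = CARD('n)^3 - CARD('n)^2;
            U = {m. \<forall>j<K. h j m \<noteq> 0};
            val = (\<lambda>m i. fst (f i) m / snd (f i) m)
        in
        (\<forall>i<N. is_ratfun (f i) \<and> invariant_ratfun (f i)) \<and>
        (\<forall>P. poly_fun {..<N} P \<and> (\<exists>x. P x \<noteq> 0) \<longrightarrow>
             (\<exists>m. (\<forall>i<N. snd (f i) m \<noteq> 0) \<and> P (val m) \<noteq> 0)) \<and>
        (\<forall>j<K. poly_fun UNIV (h j) \<and> \<not> (\<exists>c. \<forall>m. h j m = c)) \<and>
        (\<forall>i<N. \<forall>m\<in>U. snd (f i) m \<noteq> 0) \<and>
        (\<forall>a\<in>U. \<forall>b\<in>U. orbit a = orbit b \<longleftrightarrow> (\<forall>i<N. val a i = val b i)) \<and>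
        (\<forall>r. is_ratfun r \<and> invariant_ratfun r \<longrightarrow>
           (\<exists>A B. poly_fun {..<N} A \<and> poly_fun {..<N} B \<and>
              (\<exists>m. (\<forall>i<N. snd (f i) m \<noteq> 0) \<and> B (val m) \<noteq> 0) \<and>
              (\<forall>m. (\<forall>i<N. snd (f i) m \<noteq> 0) \<longrightarrow>
                   fst r m * B (val m) = snd r m * A (val m))))"
proof -
  define N where "N = CARD('n)^3 - CARD('n)^2"
  have inf: "infinite (UNIV :: 'k set)" by (rule alg_closed_infinite[OF alg])
  have N0: "N > 0"
  proof -
    have "CARD('n)^2 < CARD('n)^3" using n2 by (simp add: power_strict_increasing)
    then show ?thesis by (simp add: N_def)
  qed
  have finF: "finite (Fset :: ('n \<times> 'n \<times> 'n) set)" by simp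
  obtain en where en: "bij_betw en {..<N} (Fset :: ('n \<times> 'n \<times> 'n) set)"
    using ex_bij_betw_nat_finite[OF finF] card_Fset[OF n2] by (auto simp: N_def atLeast0LessThan)
  define xi where "xi = inv_into {..<N} en"
  have xiF: "\<And>t. t \<in> Fset \<Longrightarrow> xi t \<in> {..<N}"
    using en unfolding xi_def bij_betw_def by (metis inv_into_into)
  have enxi: "\<And>t. t \<in> Fset \<Longrightarrow> en (xi t) = t"
    using en unfolding xi_def bij_betw_def by (metis f_inv_into_f)
  have enF: "\<And>i. i < N \<Longrightarrow> en i \<in> Fset"
    using en unfolding bij_betw_def by auto
  have xien: "\<And>i. i < N \<Longrightarrow> xi (en i) = i"
    using en unfolding xi_def bij_betw_def by (simp add: inv_into_f_f)
  obtain pd kd where pd: "poly_fun UNIV pd" "\<forall>T::('k,'n) tensor. beta T \<noteq> 0 \<longrightarrow> det (Wm T) = pd T / beta T ^ kd"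
    using ratw_detW unfolding ratw_def by blast
  define D where "D = (\<lambda>T::('k,'n) tensor. beta T * pd T)"
  have pfD: "poly_fun UNIV D" unfolding D_def by (intro pf_mult pf_beta pd)
  have goodD: "good T \<longleftrightarrow> D T \<noteq> 0" for T
    using pd(2) by (auto simp: good_def D_def)
  have "\<forall>x. \<exists>pk. poly_fun UNIV (fst pk) \<and> (\<forall>T. D T \<noteq> 0 \<longrightarrow> can T x = fst pk T / D T ^ snd pk)"
  proof
    fix x
    have "ratw D (\<lambda>T. can T x)" unfolding D_def by (rule ratw_can[OF pd(1), where kd=kd]) (simp add: pd(2))
    then show "\<exists>pk. poly_fun UNIV (fst pk) \<and> (\<forall>T. D T \<noteq> 0 \<longrightarrow> can T x = fst pk T / D T ^ snd pk)"
      unfolding ratw_def by auto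
  qed
  then obtain PK where PK: "\<And>x. poly_fun UNIV (fst (PK x))" "\<And>x T. D T \<noteq> 0 \<Longrightarrow> can T x = fst (PK x) T / D T ^ snd (PK x)"
    by metis
  define f :: "nat \<Rightarrow> (('k,'n) tensor \<Rightarrow> 'k) \<times> (('k,'n) tensor \<Rightarrow> 'k)"
    where "f = (\<lambda>i. (\<lambda>T. fst (PK (en i)) T * D T, \<lambda>T. D T ^ (snd (PK (en i)) + 1)))"
  define h :: "nat \<Rightarrow> ('k,'n) tensor \<Rightarrow> 'k" where "h = (\<lambda>j. D)"
  have snd_nz: "snd (f i) T \<noteq> 0 \<longleftrightarrow> D T \<noteq> 0" for i T by (auto simp: f_def)
  have fval: "fst (f i) T / snd (f i) T = can T (en i)" if "D T \<noteq> 0" for i T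
    using PK(2)[OF that, of "en i"] that by (simp add: f_def)
  have allsnd: "(\<forall>i<N. snd (f i) m \<noteq> 0) \<longleftrightarrow> D m \<noteq> 0" for m
    using N0 snd_nz by auto
  have DEx: "D (Exm :: ('k,'n) tensor) \<noteq> 0" using good_Ex[OF n2] goodD by blast
  have Phi_val: "Phi xi (\<lambda>i. fst (f i) m / snd (f i) m) = can m" if Dm: "D m \<noteq> 0" for m
  proof -
    have gm: "good m" using Dm goodD by blast
    have "Phi xi (\<lambda>i. fst (f i) m / snd (f i) m) = Phi xi (\<lambda>i. can m (en i))"
      by (rule Phi_dep[OF n2 xiF]) (assumption, rule fval[OF Dm])
    also have "\<dots> = can m" by (rule Phi_recover[OF n2 can_props(2)[OF n2 gm] enxi])
    finally show ?thesis .
  qed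
  have C1: "\<forall>i<N. is_ratfun (f i) \<and> invariant_ratfun (f i)"
  proof (intro allI impI conjI)
    fix i assume "i < N"
    show "is_ratfun (f i)" unfolding is_ratfun_def
      using DEx snd_nz by (auto simp: f_def intro!: pf_mult pf_pow PK pfD)
    show "invariant_ratfun (f i)" unfolding invariant_ratfun_ip
    proof (intro allI impI)
      fix G H :: "'k^'n^'n" and m :: "('k,'n) tensor" assume ip: "ip G H"
      show "fst (f i) (actv G H m) * snd (f i) m = fst (f i) m * snd (f i) (actv G H m)"
      proof (cases "good m")
        case True
        then have g2: "good (actv G H m)" by (rule good_actv[OF ip])
        have d1: "D m \<noteq> 0" and d2: "D (actv G H m) \<noteq> 0" using True g2 goodD by auto
        have "fst (f i) (actv G H m) / snd (f i) (actv G H m) = fst (f i) m / snd (f i) m"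
          using fval[OF d1] fval[OF d2] can_actv[OF ip True] by simp
        then show ?thesis using snd_nz d1 d2 by (simp add: field_simps)
      next
        case False
        then have "\<not> good (actv G H m)" using good_actv_iff[OF ip] by blast
        then have "D m = 0" "D (actv G H m) = 0" using False goodD by auto
        then show ?thesis by (simp add: f_def)
      qed
    qed
  qed
  have C2: "\<forall>P. poly_fun {..<N} P \<and> (\<exists>x. P x \<noteq> 0) \<longrightarrow>
             (\<exists>m. (\<forall>i<N. snd (f i) m \<noteq> 0) \<and> P (\<lambda>i. fst (f i) m / snd (f i) m) \<noteq> 0)"
  proof (intro allI impI, elim conjE exE)
    fix P :: "(nat \<Rightarrow> 'k) \<Rightarrow> 'k" and x0 assume P: "poly_fun {..<N} P" and x0: "P x0 \<noteq> 0"
    define Q where "Q = (\<lambda>y. D (Phi xi y))"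
    have pfQ: "poly_fun {..<N} Q" unfolding Q_def
      by (rule pf_comp[OF pfD], rule pf_Phi[OF n2 xiF])
    define y0 where "y0 = (\<lambda>i. (Exm :: ('k,'n) tensor) (en i))"
    have "Phi xi y0 = (Exm :: ('k,'n) tensor)" unfolding y0_def by (rule Phi_recover[OF n2 sc_Ex[OF n2] enxi])
    then have "Q y0 \<noteq> 0" using DEx by (simp add: Q_def)
    then obtain y where y: "P y \<noteq> 0" "Q y \<noteq> 0" using pf_nonvanish2[OF inf P pfQ x0] by blast
    define m where "m = (Phi xi y :: ('k,'n) tensor)"
    have Dm: "D m \<noteq> 0" using y by (simp add: Q_def m_def)
    have gm: "good m" using Dm goodD by blast
    then have bm: "beta (Phi xi y :: ('k,'n) tensor) \<noteq> 0" by (simp add: good_def m_def)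
    have cm: "can m = m" unfolding m_def by (rule sc_can(2)[OF n2 sc_Phi[OF n2] bm])
    have vy: "(\<lambda>i. fst (f i) m / snd (f i) m) i = y i" if "i \<in> {..<N}" for i
    proof -
      have iN: "i < N" using that by simp
      have "fst (f i) m / snd (f i) m = can m (en i)" by (rule fval[OF Dm])
      also have "\<dots> = Phi xi y (en i)" by (simp only: cm) (simp add: m_def)
      also have "\<dots> = y (xi (en i))" by (rule Phi_F[OF enF[OF iN]])
      also have "\<dots> = y i" by (simp add: xien[OF iN])
      finally show ?thesis by simp
    qed
    have Pv: "P (\<lambda>i. fst (f i) m / snd (f i) m) = P y" by (rule pf_dep[OF P vy])
    show "\<exists>m. (\<forall>i<N. snd (f i) m \<noteq> 0) \<and> P (\<lambda>i. fst (f i) m / snd (f i) m) \<noteq> 0"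
    proof (intro exI[of _ m] conjI)
      show "\<forall>i<N. snd (f i) m \<noteq> 0" using allsnd[of m] Dm by simp
      show "P (\<lambda>i. fst (f i) m / snd (f i) m) \<noteq> 0" using Pv y(1) by simp
    qed
  qed
  have D0: "D (\<lambda>_. 0) = 0"
  proof -
    have "tau ((\<lambda>_. 0) :: ('k,'n) tensor) = 0" by (simp add: tau_def vec_eq_iff)
    then have "beta ((\<lambda>_. 0) :: ('k,'n) tensor) = 0" by (rule beta_zero)
    then show ?thesis by (simp add: D_def)
  qed
  have C3: "\<forall>j<(1::nat). poly_fun UNIV (h j) \<and> \<not> (\<exists>c. \<forall>m. h j m = c)"
    using pfD DEx D0 unfolding h_def by metis
  have C5: "\<forall>a\<in>{m. \<forall>j<(1::nat). h j m \<noteq> 0}. \<forall>b\<in>{m. \<forall>j<(1::nat). h j m \<noteq> 0}. orbit a = orbit b \<longleftrightarrow>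
       (\<forall>i<N. (\<lambda>m i. fst (f i) m / snd (f i) m) a i = (\<lambda>m i. fst (f i) m / snd (f i) m) b i)"
  proof (intro ballI)
    fix a b assume "a \<in> {m. \<forall>j<(1::nat). h j m \<noteq> 0}" "b \<in> {m. \<forall>j<(1::nat). h j m \<noteq> 0}"
    then have Da: "D a \<noteq> 0" and Db: "D b \<noteq> 0" by (auto simp: h_def)
    have "orbit a = orbit b \<longleftrightarrow> can a = can b" using orbit_can Da Db goodD by blast
    also have "\<dots> \<longleftrightarrow> (\<forall>i<N. fst (f i) a / snd (f i) a = fst (f i) b / snd (f i) b)"
    proof
      assume "can a = can b" then show "\<forall>i<N. fst (f i) a / snd (f i) a = fst (f i) b / snd (f i) b"
        by (simp add: fval Da Db)
    next
      assume "\<forall>i<N. fst (f i) a / snd (f i) a = fst (f i) b / snd (f i) b"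
      then have "Phi xi (\<lambda>i. fst (f i) a / snd (f i) a) = Phi xi (\<lambda>i. fst (f i) b / snd (f i) b)"
        by (intro Phi_dep[OF n2 xiF]) auto
      then show "can a = can b" using Phi_val Da Db by simp
    qed
    finally show "orbit a = orbit b \<longleftrightarrow>
       (\<forall>i<N. (\<lambda>m i. fst (f i) m / snd (f i) m) a i = (\<lambda>m i. fst (f i) m / snd (f i) m) b i)" by simp
  qed
  have C6: "\<forall>r. is_ratfun r \<and> invariant_ratfun r \<longrightarrow>
           (\<exists>A B. poly_fun {..<N} A \<and> poly_fun {..<N} B \<and>
              (\<exists>m. (\<forall>i<N. snd (f i) m \<noteq> 0) \<and> B (\<lambda>i. fst (f i) m / snd (f i) m) \<noteq> 0) \<and>
              (\<forall>m. (\<forall>i<N. snd (f i) m \<noteq> 0) \<longrightarrow>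
                   fst r m * B (\<lambda>i. fst (f i) m / snd (f i) m) = snd r m * A (\<lambda>i. fst (f i) m / snd (f i) m)))"
  proof (intro allI impI, elim conjE)
    fix r :: "(('k,'n) tensor \<Rightarrow> 'k) \<times> (('k,'n) tensor \<Rightarrow> 'k)"
    assume rr: "is_ratfun r" and ri: "invariant_ratfun r"
    have pfp: "poly_fun UNIV (fst r)" and pfq: "poly_fun UNIV (snd r)" and "\<exists>m. snd r m \<noteq> 0"
      using rr by (auto simp: is_ratfun_def)
    then obtain m0 where "snd r m0 \<noteq> 0" by blast
    then obtain m1 where m1: "D m1 \<noteq> 0" "snd r m1 \<noteq> 0" using pf_nonvanish2[OF inf pfD pfq DEx] by blast
    have g1: "good m1" using m1 goodD by blast
    let ?W = "Wm m1" and ?Wi = "matrix_inv (Wm m1)"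
    have ipW: "ip ?W ?Wi" by (rule good_ip[OF g1])
    define Psi where "Psi = (\<lambda>y. actv ?W ?Wi (Phi xi y :: ('k,'n) tensor))"
    have pfPsi: "poly_fun {..<N} (\<lambda>y. Psi y t)" for t
      unfolding Psi_def by (rule pf_actv, rule pf_Phi[OF n2 xiF])
    define A where "A = (\<lambda>y. fst r (Psi y))"
    define B where "B = (\<lambda>y. snd r (Psi y))"
    have pfA: "poly_fun {..<N} A" unfolding A_def by (rule pf_comp[OF pfp pfPsi])
    have pfB: "poly_fun {..<N} B" unfolding B_def by (rule pf_comp[OF pfq pfPsi])
    have Psi_val: "Psi (\<lambda>i. fst (f i) m / snd (f i) m) = actv (?W ** matrix_inv (Wm m)) (Wm m ** ?Wi) m"
      if "D m \<noteq> 0" for m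
      unfolding Psi_def Phi_val[OF that] can_def by (simp add: actv_comp)
    have ipm: "ip (?W ** matrix_inv (Wm m)) (Wm m ** ?Wi)" if "D m \<noteq> 0" for m
      by (rule ip_mult[OF ip_sym[OF good_ip] ipW]) (use that goodD in blast)
    have inv: "\<forall>G H m. ip G H \<longrightarrow> fst r (actv G H m) * snd r m = fst r m * snd r (actv G H m)"
      using ri unfolding invariant_ratfun_ip .
    show "\<exists>A B. poly_fun {..<N} A \<and> poly_fun {..<N} B \<and>
              (\<exists>m. (\<forall>i<N. snd (f i) m \<noteq> 0) \<and> B (\<lambda>i. fst (f i) m / snd (f i) m) \<noteq> 0) \<and>
              (\<forall>m. (\<forall>i<N. snd (f i) m \<noteq> 0) \<longrightarrow>
                   fst r m * B (\<lambda>i. fst (f i) m / snd (f i) m) = snd r m * A (\<lambda>i. fst (f i) m / snd (f i) m))"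
    proof (rule exI[of _ A], rule exI[of _ B], intro conjI)
      show "poly_fun {..<N} A" by (rule pfA)
      show "poly_fun {..<N} B" by (rule pfB)
      have "Psi (\<lambda>i. fst (f i) m1 / snd (f i) m1) = m1"
        using Psi_val[OF m1(1)] ipW by (simp add: ip_def actv_id)
      then have Bm1: "B (\<lambda>i. fst (f i) m1 / snd (f i) m1) \<noteq> 0" using m1(2) by (simp add: B_def)
      show "\<exists>m. (\<forall>i<N. snd (f i) m \<noteq> 0) \<and> B (\<lambda>i. fst (f i) m / snd (f i) m) \<noteq> 0"
      proof (intro exI[of _ m1] conjI)
        show "\<forall>i<N. snd (f i) m1 \<noteq> 0" using allsnd[of m1] m1(1) by simp
      qed (rule Bm1)
      show "\<forall>m. (\<forall>i<N. snd (f i) m \<noteq> 0) \<longrightarrow>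
                   fst r m * B (\<lambda>i. fst (f i) m / snd (f i) m) = snd r m * A (\<lambda>i. fst (f i) m / snd (f i) m)"
      proof (intro allI impI)
        fix m assume "\<forall>i<N. snd (f i) m \<noteq> 0"
        then have Dm: "D m \<noteq> 0" using allsnd by blast
        show "fst r m * B (\<lambda>i. fst (f i) m / snd (f i) m) = snd r m * A (\<lambda>i. fst (f i) m / snd (f i) m)"
          using inv[rule_format, OF ipm[OF Dm], of m] unfolding A_def B_def Psi_val[OF Dm]
          by (simp add: mult.commute)
      qed
    qed
  qed
  show ?thesis
    apply (rule exI[of _ f], rule exI[of _ h], rule exI[of _ 1])
    apply (unfold Let_def N_def[symmetric])
    apply (intro conjI)
         apply (rule C1)
        apply (rule C2)
       apply (rule C3)
      apply (simp add: h_def snd_nz)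
     apply (rule C5)
    apply (rule C6)
    done
qed


lemma main1:
  assumes alg: "alg_closed_field TYPE('k::field)" and n1: "CARD('n::finite) = 1"
  shows "(\<forall>r :: (('k,'n) tensor \<Rightarrow> 'k) \<times> (('k,'n) tensor \<Rightarrow> 'k).
          is_ratfun r \<and> invariant_ratfun r \<longrightarrow> (\<exists>c. \<forall>m. fst r m = c * snd r m)) \<and>
      (\<forall>a b :: ('k,'n) tensor. a \<noteq> (\<lambda>_. 0) \<and> b \<noteq> (\<lambda>_. 0) \<longrightarrow> orbit a = orbit b)"
proof -
  have inf: "infinite (UNIV :: 'k set)" by (rule alg_closed_infinite[OF alg])
  obtain u :: 'n where U: "(UNIV :: 'n set) = {u}" using n1 card_1_singletonE by (metis One_nat_def)
  have allu: "x = u" for x :: 'n using U by auto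
  have tens: "T = (\<lambda>_. T (u,u,u))" for T :: "('k,'n) tensor"
  proof
    fix t :: "'n \<times> 'n \<times> 'n"
    obtain a b c where "t = (a,b,c)" by (cases t) auto
    then show "T t = T (u,u,u)" using allu by metis
  qed
  define G :: "'k \<Rightarrow> 'k^'n^'n" where "G s = (\<chi> i j. s)" for s
  have ipG: "ip (G s) (G (1/s))" if "s \<noteq> 0" for s
    unfolding ip_def using that by (simp add: G_def vec_eq_iff matrix_matrix_mult_def mat_def U) (metis allu)
  have actG: "actv (G s) (G (1/s)) T = (\<lambda>_. T (u,u,u) / s)" if "s \<noteq> 0" for s and T :: "('k,'n) tensor"
  proof
    fix t :: "'n \<times> 'n \<times> 'n"
    obtain a b c where t: "t = (a,b,c)" by (cases t) auto
    show "actv (G s) (G (1/s)) T t = T (u,u,u) / s"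
      unfolding t actv_def using that by (simp add: G_def U allu[of a] allu[of b] allu[of c] power2_eq_square field_simps)
  qed
  have orb: "\<forall>a b :: ('k,'n) tensor. a \<noteq> (\<lambda>_. 0) \<and> b \<noteq> (\<lambda>_. 0) \<longrightarrow> orbit a = orbit b"
  proof (intro allI impI, elim conjE)
    fix a b :: "('k,'n) tensor" assume a: "a \<noteq> (\<lambda>_. 0)" and b: "b \<noteq> (\<lambda>_. 0)"
    have a0: "a (u,u,u) \<noteq> 0" using a tens[of a] by force
    have b0: "b (u,u,u) \<noteq> 0" using b tens[of b] by force
    define s where "s = a (u,u,u) / b (u,u,u)"
    have s0: "s \<noteq> 0" using a0 b0 by (simp add: s_def)
    have "actv (G s) (G (1/s)) a = b"
      using actG[OF s0, of a] tens[of b] a0 b0 by (simp add: s_def)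
    then have "b \<in> orbit a" using in_orbit[OF ipG[OF s0]] by metis
    then show "orbit a = orbit b" using orbit_eq_iff by blast
  qed
  have rat: "\<exists>c. \<forall>m. fst r m = c * snd r m" if rr: "is_ratfun r" and ri: "invariant_ratfun r"
    for r :: "(('k,'n) tensor \<Rightarrow> 'k) \<times> (('k,'n) tensor \<Rightarrow> 'k)"
  proof -
    have pfp: "poly_fun UNIV (fst r)" and pfq: "poly_fun UNIV (snd r)" and "\<exists>m. snd r m \<noteq> 0"
      using rr by (auto simp: is_ratfun_def)
    then obtain m0 where m0: "snd r m0 \<noteq> 0" by blast
    obtain Pp where Pp: "\<forall>t. fst r (\<lambda>i. 0 + t * 1) = poly Pp t" using pf_line[OF pfp, of "\<lambda>_. 0" "\<lambda>_. 1"] by blast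
    obtain Qp where Qp: "\<forall>t. snd r (\<lambda>i. 0 + t * 1) = poly Qp t" using pf_line[OF pfq, of "\<lambda>_. 0" "\<lambda>_. 1"] by blast
    have P: "fst r T = poly Pp (T (u,u,u))" for T using Pp tens[of T] by (metis add_0 mult_1_right)
    have Q: "snd r T = poly Qp (T (u,u,u))" for T using Qp tens[of T] by (metis add_0 mult_1_right)
    have "poly Qp (m0 (u,u,u)) \<noteq> 0" using m0 Q by simp
    then have Qnz: "Qp \<noteq> 0" by auto
    have "finite (insert 0 {x. poly Qp x = 0})" using poly_roots_finite[OF Qnz] by simp
    then obtain x0 where x0: "x0 \<notin> insert 0 {x. poly Qp x = 0}" using inf
      by (metis (mono_tags, lifting) UNIV_I finite_subset subsetI)
    then have x00: "x0 \<noteq> 0" and qx0: "poly Qp x0 \<noteq> 0" by auto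
    have inv: "\<forall>G H m. ip G H \<longrightarrow> fst r (actv G H m) * snd r m = fst r m * snd r (actv G H m)"
      using ri unfolding invariant_ratfun_ip .
    define c where "c = poly Pp x0 / poly Qp x0"
    have eqy: "poly Pp y = c * poly Qp y" if "y \<noteq> 0" for y
    proof -
      define s where "s = x0 / y"
      have s0: "s \<noteq> 0" using x00 that by (simp add: s_def)
      have "fst r (actv (G s) (G (1/s)) (\<lambda>_. x0)) * snd r (\<lambda>_. x0) = fst r (\<lambda>_. x0) * snd r (actv (G s) (G (1/s)) (\<lambda>_. x0))"
        using inv ipG[OF s0] by blast
      moreover have "actv (G s) (G (1/s)) (\<lambda>_. x0) = (\<lambda>_. y)" using actG[OF s0] that x00 by (simp add: s_def)
      ultimately have "poly Pp y * poly Qp x0 = poly Pp x0 * poly Qp y" using P Q by simp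
      then show ?thesis using qx0 by (simp add: c_def field_simps)
    qed
    have "poly (Pp - smult c Qp) = poly 0"
    proof (rule ccontr)
      assume "poly (Pp - smult c Qp) \<noteq> poly 0"
      then have nz: "Pp - smult c Qp \<noteq> 0" by auto
      have "UNIV - {0} \<subseteq> {y. poly (Pp - smult c Qp) y = 0}" using eqy by auto
      then have "finite (UNIV - {0::'k})" using poly_roots_finite[OF nz] finite_subset by blast
      then show False using inf by simp
    qed
    then have "\<forall>y. poly Pp y = c * poly Qp y" by (metis diff_eq_eq poly_0 poly_diff poly_smult add.left_neutral)
    then show ?thesis using P Q by auto
  qed
  show ?thesis using rat orb by blast
qed


theorem corollary1:
  assumes "alg_closed_field TYPE('k::field)"
    and "(2::'k) \<noteq> 0"
  shows
   "(CARD('n::finite) \<ge> 2 \<longrightarrow>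
      (\<exists>(f :: nat \<Rightarrow> (('k,'n) tensor \<Rightarrow> 'k) \<times> (('k,'n) tensor \<Rightarrow> 'k))
        (h :: nat \<Rightarrow> ('k,'n) tensor \<Rightarrow> 'k) (K :: nat).
        let N = CARD('n)^3 - CARD('n)^2;
            U = {m. \<forall>j<K. h j m \<noteq> 0};
            val = (\<lambda>m i. fst (f i) m / snd (f i) m)
        in
        \<comment> \<open>the f_i are G-invariant rational functions\<close>
        (\<forall>i<N. is_ratfun (f i) \<and> invariant_ratfun (f i)) \<and>
        \<comment> \<open>algebraically independent over k\<close>
        (\<forall>P. poly_fun {..<N} P \<and> (\<exists>x. P x \<noteq> 0) \<longrightarrow>
             (\<exists>m. (\<forall>i<N. snd (f i) m \<noteq> 0) \<and> P (val m) \<noteq> 0)) \<and>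
        \<comment> \<open>the h_j are nonconstant polynomial functions\<close>
        (\<forall>j<K. poly_fun UNIV (h j) \<and> \<not> (\<exists>c. \<forall>m. h j m = c)) \<and>
        \<comment> \<open>(i): the f_i are defined on U and separate G-orbits in U\<close>
        (\<forall>i<N. \<forall>m\<in>U. snd (f i) m \<noteq> 0) \<and>
        (\<forall>a\<in>U. \<forall>b\<in>U. orbit a = orbit b \<longleftrightarrow> (\<forall>i<N. val a i = val b i)) \<and>
        \<comment> \<open>(ii): every G-invariant rational function lies in k(f_i)\<close>
        (\<forall>r. is_ratfun r \<and> invariant_ratfun r \<longrightarrow>
           (\<exists>A B. poly_fun {..<N} A \<and> poly_fun {..<N} B \<and>
              (\<exists>m. (\<forall>i<N. snd (f i) m \<noteq> 0) \<and> B (val m) \<noteq> 0) \<and>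
              (\<forall>m. (\<forall>i<N. snd (f i) m \<noteq> 0) \<longrightarrow>
                   fst r m * B (val m) = snd r m * A (val m)))))) \<and>
    (CARD('n) = 1 \<longrightarrow>
      (\<forall>r :: (('k,'n) tensor \<Rightarrow> 'k) \<times> (('k,'n) tensor \<Rightarrow> 'k).
          is_ratfun r \<and> invariant_ratfun r \<longrightarrow> (\<exists>c. \<forall>m. fst r m = c * snd r m)) \<and>
      (\<forall>a b :: ('k,'n) tensor. a \<noteq> (\<lambda>_. 0) \<and> b \<noteq> (\<lambda>_. 0) \<longrightarrow> orbit a = orbit b))"
    apply (rule conjI)
   apply (rule impI, erule main2[OF assms(1)])
  apply (rule impI, erule main1[OF assms(1)])
  done

end
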